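(* Consider the $T$-round online first-price auction problem and the combined policy described in the context. For a sequence $(v_t,m_t)_{t=1}^T$, let $V_T\coloneqq\sum_{t=2}^T|m_t-m_{t-1}|$ and $L_T\coloneqq\sum_{t=2}^T\mathbbm{1}(m_t\ne m_{t-1})$, and assume $V_T=\Omega(\ln T)$. Then the combined policy achieves expected dynamic regret $\tilde{O}(\min\{\sqrt{TV_T},L_T\})$.
   Context: Online first-price auction over $T$ rounds: at each round $t$ the learner observes a private value $v_t\in[0,1]$, submits a bid $b_t\in[0,1]$ (possibly randomized, depending only on past $(v_s,m_s)_{s<t}$ and $v_t$), then observes $m_t\in[0,1]$, the highest bid of the other bidders, and receives reward $r(b_t;v_t,m_t)$ with $r(b;v,m)\coloneqq(v-b)\mathbbm{1}(b\ge m)$. The expected dynamic regret is $\mathbb{E}[\mathrm{DR}_T(\pi)]\coloneqq\sum_{t=1}^T\max\{v_t-m_t,0\}-\sum_{t=1}^T\mathbb{E}[r(b_t;v_t,m_t)]$. $\tilde{O}(\cdot)$ hides polylogarithmic factors in $T$. Base policy $\mathcal{A}$ (AR-Prod): experts $i\in\{1,\dots,N\}$, $N=1/\epsilon$, $\epsilon=1/T$, expert $i$ bids $\min\{v_t,i\epsilon\}$ with reward $r_{t,i}=r(\min\{v_t,i\epsilon\};v_t,m_t)$; time is split into batches, at the start of each batch weights reset to uniform; bid $\min\{v_t,i\epsilon\}$ is chosen w.p. $p_{t,i}$, then $p_{t+1,i}\propto(1+\eta(r_{t,i}-\mu_t))p_{t,i}$ with $\eta=1/2$, $\mu_t=\max\{v_t-m_t,0\}$;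 batch $j$ continues while its current length $\Delta_{T,j}<\sqrt{T/(\sum_{i=1}^jV_{T,i}+1/T)}$, where $V_{T,i}$ is the variation $\sum|m_t-m_{t-1}|$ over consecutive rounds within batch $i$ (so far, for the current batch). Base policy $\mathcal{B}$ (AR-OMD): same experts (with suitably chosen precision $\epsilon$ and learning rate $\eta$); a new batch begins at round $t+1$ whenever at a non-first round $t$ of the batch $m_t\ne m_{t-1}$; in round $t$ of a batch starting at $t_0$, bid $\min\{v_t,i\epsilon\}$ w.p. $p_{t,i}\propto\exp(\eta(\sum_{s=t_0}^{t-1}r_{s,i}+r(\min\{v_t,i\epsilon\};v_t,m_{t-1})))$. Combined policy: with $\eta'=\frac12\sqrt{\ln T/T}$, $w_1^{\mathcal{A}}=\eta'$, $w^{\mathcal{B}}=1-\eta'$ (fixed); at each round both base policies produce bids $b_t^{\mathcal{A}},b_t^{\mathcal{B}}$; the learner bids $b_t^{\mathcal{A}}$ with probability $p_t=w_t^{\mathcal{A}}/(w_t^{\mathcal{A}}+w^{\mathcal{B}})$ and $b_t^{\mathcal{B}}$ otherwise; after observing $m_t$ (which is passed to both base policies), set $\delta_t=r(b_t^{\mathcal{A}};v_t,m_t)-r(b_t^{\mathcal{B}};v_t,m_t)$ and $w_{t+1}^{\mathcal{A}}=w_t^{\mathcal{A}}(1+\eta'\delta_t)$. *)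

theory Defs
  imports "HOL-Probability.Probability"
begin

definition r :: "real \<Rightarrow> real \<Rightarrow> real \<Rightarrow> real" where
  "r b v m = (if b \<ge> m then v - b else 0)"

definition wpmf :: "nat \<Rightarrow> (nat \<Rightarrow> real) \<Rightarrow> nat pmf" where
  "wpmf N w = embed_pmf (\<lambda>i. if i \<in> {1..N} then w i / (\<Sum>j=1..N. w j) else 0)"

text \<open>AR-Prod (epsilon = 1/T, N = T experts, eta = 1/2).
  prodState T v m t is the state at the start of round t+1:
  (start of current batch, total variation of completed batches, unnormalised weights).\<close>
fun prodState :: "nat \<Rightarrow> (nat \<Rightarrow> real) \<Rightarrow> (nat \<Rightarrow> real) \<Rightarrow> nat \<Rightarrow> nat \<times> real \<times> (nat \<Rightarrow> real)" where
  "prodState T v m 0 = (1, 0, (\<lambda>i. 1))"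
| "prodState T v m (Suc t) = (case prodState T v m t of (s, Vp, w) \<Rightarrow>
     let u = Suc t;
         mu = max (v u - m u) 0;
         w' = (\<lambda>i. w i * (1 + (1/2) * (r (min (v u) (real i / real T)) (v u) (m u) - mu)));
         Vc = (\<Sum>k\<in>{s<..u}. \<bar>m k - m (k - 1)\<bar>);
         len = u - s + 1
     in if real len < sqrt (real T / (Vp + Vc + 1 / real T))
        then (s, Vp, w')
        else (Suc u, Vp + Vc, (\<lambda>i. 1)))"

definition bidA :: "nat \<Rightarrow> (nat \<Rightarrow> real) \<Rightarrow> (nat \<Rightarrow> real) \<Rightarrow> nat \<Rightarrow> real pmf" where
  "bidA T v m t = map_pmf (\<lambda>i. min (v t) (real i / real T))
                    (wpmf T (snd (snd (prodState T v m (t - 1)))))"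

text \<open>AR-OMD batch structure: start of the batch containing round t (t \<ge> 1).\<close>
fun omdStart :: "(nat \<Rightarrow> real) \<Rightarrow> nat \<Rightarrow> nat" where
  "omdStart m 0 = 1"
| "omdStart m (Suc t) = (if t = 0 then 1 else
     (let t0 = omdStart m t in if t \<noteq> t0 \<and> m t \<noteq> m (t - 1) then Suc t else t0))"

text \<open>Bid distribution of AR-OMD at round t with NB experts (epsilon = 1/NB) and rate eta.\<close>
definition bidB :: "nat \<Rightarrow> real \<Rightarrow> (nat \<Rightarrow> real) \<Rightarrow> (nat \<Rightarrow> real) \<Rightarrow> nat \<Rightarrow> real pmf" where
  "bidB NB eta v m t = map_pmf (\<lambda>i. min (v t) (real i / real NB))
     (wpmf NB (\<lambda>i. exp (eta * ((\<Sum>s\<in>{omdStart m t..<t}. r (min (v s) (real i / real NB)) (v s) (m s))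
                              + r (min (v t) (real i / real NB)) (v t) (m (t - 1))))))"

definition etaC :: "nat \<Rightarrow> real" where
  "etaC T = (1/2) * sqrt (ln (real T) / real T)"

text \<open>Distribution of the (random) weight w^A at the start of round t+1.\<close>
fun wDist :: "nat \<Rightarrow> nat \<Rightarrow> real \<Rightarrow> (nat \<Rightarrow> real) \<Rightarrow> (nat \<Rightarrow> real) \<Rightarrow> nat \<Rightarrow> real pmf" where
  "wDist T NB eta v m 0 = return_pmf (etaC T)"
| "wDist T NB eta v m (Suc t) =
     bind_pmf (wDist T NB eta v m t) (\<lambda>w.
     bind_pmf (bidA T v m (Suc t)) (\<lambda>bA.
     map_pmf (\<lambda>bB. w * (1 + etaC T * (r bA (v (Suc t)) (m (Suc t)) - r bB (v (Suc t)) (m (Suc t)))))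
       (bidB NB eta v m (Suc t))))"

definition learnerBid :: "nat \<Rightarrow> nat \<Rightarrow> real \<Rightarrow> (nat \<Rightarrow> real) \<Rightarrow> (nat \<Rightarrow> real) \<Rightarrow> nat \<Rightarrow> real pmf" where
  "learnerBid T NB eta v m t =
     bind_pmf (wDist T NB eta v m (t - 1)) (\<lambda>w.
     bind_pmf (bidA T v m t) (\<lambda>bA.
     bind_pmf (bidB NB eta v m t) (\<lambda>bB.
     map_pmf (\<lambda>c. if c then bA else bB) (bernoulli_pmf (w / (w + (1 - etaC T)))))))"

definition expDR :: "nat \<Rightarrow> nat \<Rightarrow> real \<Rightarrow> (nat \<Rightarrow> real) \<Rightarrow> (nat \<Rightarrow> real) \<Rightarrow> real" where
  "expDR T NB eta v m =
     (\<Sum>t=1..T. max (v t - m t) 0)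
     - (\<Sum>t=1..T. measure_pmf.expectation (learnerBid T NB eta v m t) (\<lambda>b. r b (v t) (m t)))"

definition VT :: "(nat \<Rightarrow> real) \<Rightarrow> nat \<Rightarrow> real" where
  "VT m T = (\<Sum>t=2..T. \<bar>m t - m (t - 1)\<bar>)"

definition LT :: "(nat \<Rightarrow> real) \<Rightarrow> nat \<Rightarrow> real" where
  "LT m T = real (card {t\<in>{2..T}. m t \<noteq> m (t - 1)})"

end

theory Submission
  imports Defs
begin

lemma integral_bind_pmf_fin:
  fixes f :: "'b \<Rightarrow> real"
  assumes fin: "finite (set_pmf (bind_pmf M N))"
  shows "measure_pmf.expectation (bind_pmf M N) f = measure_pmf.expectation M (\<lambda>x. measure_pmf.expectation (N x) f)"
proof -
  define S where "S = set_pmf (bind_pmf M N)"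
  define f' where "f' = (\<lambda>y. if y \<in> S then f y else 0)"
  define B where "B = (\<Sum>y\<in>S. \<bar>f y\<bar>)"
  have bnd: "\<bar>f' y\<bar> \<le> B" for y
    unfolding f'_def B_def using fin S_def
    by (auto intro: member_le_sum[where f="\<lambda>y. \<bar>f y\<bar>", simplified])
  have "measure_pmf.expectation (bind_pmf M N) f = measure_pmf.expectation (bind_pmf M N) f'"
    by (intro integral_cong_AE) (auto simp: AE_measure_pmf_iff f'_def S_def)
  also have "\<dots> = measure_pmf.expectation M (\<lambda>x. measure_pmf.expectation (N x) f')"
    unfolding measure_pmf_bind
    apply (rule integral_bind[where K="count_space UNIV" and B=B and B'=1])
    using measurable_measure_pmf[of N] bnd
    by (auto simp: measure_pmf.emeasure_space_1)
  also have "\<dots> = measure_pmf.expectation M (\<lambda>x. measure_pmf.expectation (N x) f)"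
    apply (intro integral_cong_AE)
      apply (auto simp: AE_measure_pmf_iff)
    apply (intro integral_cong_AE)
      apply (auto simp: AE_measure_pmf_iff f'_def S_def)
    done
  finally show ?thesis .
qed

definition wfun :: "nat \<Rightarrow> (nat \<Rightarrow> real) \<Rightarrow> nat \<Rightarrow> real" where
  "wfun N w = (\<lambda>i. if i \<in> {1..N} then w i / (\<Sum>j=1..N. w j) else 0)"

lemma wpmf_ok:
  assumes N: "N \<ge> 1" and pos: "\<And>i. i \<in> {1..N} \<Longrightarrow> w i > 0"
  shows "\<And>x. 0 \<le> wfun N w x" "(\<integral>\<^sup>+x. ennreal (wfun N w x) \<partial>count_space UNIV) = 1"
proof -
  have sp: "(\<Sum>j=1..N. w j) > 0" using N pos by (intro sum_pos) auto
  show "\<And>x. 0 \<le> wfun N w x" unfolding wfun_def using pos sp by (auto intro: less_imp_le)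
  have "(\<integral>\<^sup>+x. ennreal (wfun N w x) \<partial>count_space UNIV) = (\<Sum>x\<in>{1..N}. ennreal (wfun N w x))"
    by (rule nn_integral_count_space') (auto simp: wfun_def)
  also have "\<dots> = ennreal (\<Sum>x\<in>{1..N}. wfun N w x)"
    using pos sp by (intro sum_ennreal) (auto simp: wfun_def intro: less_imp_le)
  also have "(\<Sum>x\<in>{1..N}. wfun N w x) = (\<Sum>x\<in>{1..N}. w x / (\<Sum>j=1..N. w j))"
    by (auto simp: wfun_def)
  also have "\<dots> = 1" using sp by (simp add: sum_divide_distrib[symmetric])
  finally show "(\<integral>\<^sup>+x. ennreal (wfun N w x) \<partial>count_space UNIV) = 1" by simp
qed

lemma wpmf_pmf:
  assumes N: "N \<ge> 1" and pos: "\<And>i. i \<in> {1..N} \<Longrightarrow> w i > 0"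
  shows "pmf (wpmf N w) i = wfun N w i"
  unfolding wpmf_def wfun_def[symmetric]
  by (rule pmf_embed_pmf[OF wpmf_ok[OF N pos]])

lemma wpmf_set:
  assumes N: "N \<ge> 1" and pos: "\<And>i. i \<in> {1..N} \<Longrightarrow> w i > 0"
  shows "set_pmf (wpmf N w) \<subseteq> {1..N}"
  using wpmf_pmf[of N w] N pos by (auto simp: set_pmf_eq wfun_def)

lemma wpmf_expect:
  fixes h :: "nat \<Rightarrow> real"
  assumes N: "N \<ge> 1" and pos: "\<And>i. i \<in> {1..N} \<Longrightarrow> w i > 0"
  shows "measure_pmf.expectation (wpmf N w) h = (\<Sum>i=1..N. w i * h i) / (\<Sum>j=1..N. w j)"
proof -
  have "measure_pmf.expectation (wpmf N w) h = (\<Sum>a\<in>{1..N}. pmf (wpmf N w) a *\<^sub>R h a)"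
    using wpmf_set[of N w] N pos by (intro integral_measure_pmf) auto
  also have "\<dots> = (\<Sum>a\<in>{1..N}. (w a / (\<Sum>j=1..N. w j)) * h a)"
    using wpmf_pmf[of N w] N pos by (auto simp: wfun_def)
  also have "\<dots> = (\<Sum>i=1..N. w i * h i) / (\<Sum>j=1..N. w j)"
    by (simp add: sum_divide_distrib algebra_simps)
  finally show ?thesis .
qed

lemma finite_wpmf:
  assumes N: "N \<ge> 1" and pos: "\<And>i. i \<in> {1..N} \<Longrightarrow> w i > 0"
  shows "finite (set_pmf (wpmf N w))"
  using wpmf_set[of N w] N pos finite_subset by blast

definition gA :: "nat \<Rightarrow> (nat \<Rightarrow> real) \<Rightarrow> (nat \<Rightarrow> real) \<Rightarrow> nat \<Rightarrow> nat \<Rightarrow> real" where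
  "gA T v m u i = r (min (v u) (real i / real T)) (v u) (m u) - max (v u - m u) 0"

lemma r_bid_bounds:
  assumes "v \<in> {0..1}" "m \<in> {0..1}" "x \<ge> 0"
  shows "0 \<le> r (min v x) v m" "r (min v x) v m \<le> max (v - m) 0"
  using assms by (auto simp: r_def min_def)

lemma gA_bounds:
  assumes "v u \<in> {0..1}" "m u \<in> {0..1}"
  shows "-1 \<le> gA T v m u i" "gA T v m u i \<le> 0"
  using assms r_bid_bounds[of "v u" "m u" "real i / real T"] unfolding gA_def by auto

lemma tele_abs:
  fixes m :: "nat \<Rightarrow> real"
  assumes "s \<le> x"
  shows "\<bar>m x - m s\<bar> \<le> (\<Sum>k\<in>{s<..x}. \<bar>m k - m (k - 1)\<bar>)"
  using assms
proof (induction x)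
  case 0 then show ?case by simp
next
  case (Suc x)
  show ?case
  proof (cases "s = Suc x")
    case True then show ?thesis by simp
  next
    case False
    then have sx: "s \<le> x" using Suc.prems by simp
    have eq: "{s<..Suc x} = insert (Suc x) {s<..x}" using sx by auto
    have "(\<Sum>k\<in>{s<..Suc x}. \<bar>m k - m (k - 1)\<bar>) = \<bar>m (Suc x) - m x\<bar> + (\<Sum>k\<in>{s<..x}. \<bar>m k - m (k - 1)\<bar>)"
      unfolding eq by (subst sum.insert) auto
    moreover have "\<bar>m (Suc x) - m s\<bar> \<le> \<bar>m (Suc x) - m x\<bar> + \<bar>m x - m s\<bar>" by simp
    ultimately show ?thesis using Suc.IH[OF sx] by linarith
  qed
qed

lemma spread_comparator:
  fixes T :: nat and v m :: "nat \<Rightarrow> real"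
  assumes T1: "T \<ge> 1" and hv: "\<forall>t\<in>{1..T}. v t \<in> {0..1} \<and> m t \<in> {0..1}"
    and se: "1 \<le> s" "s \<le> e" "e \<le> T"
  shows "\<exists>i\<in>{1..T}. \<forall>x\<in>{s..e}. - gA T v m x i \<le> 2 * (\<Sum>k\<in>{s<..e}. \<bar>m k - m (k - 1)\<bar>) + 1 / real T"
proof -
  define V where "V = (\<Sum>k\<in>{s<..e}. \<bar>m k - m (k - 1)\<bar>)"
  have V0: "V \<ge> 0" unfolding V_def by (intro sum_nonneg) auto
  have ms: "m s \<in> {0..1}" using hv se by auto
  have spread: "\<bar>m x - m s\<bar> \<le> V" if "x \<in> {s..e}" for x
  proof -
    have "\<bar>m x - m s\<bar> \<le> (\<Sum>k\<in>{s<..x}. \<bar>m k - m (k - 1)\<bar>)" using that by (intro tele_abs) auto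
    also have "\<dots> \<le> V" unfolding V_def using that by (intro sum_mono2) auto
    finally show ?thesis .
  qed
  define b where "b = min 1 (m s + V)"
  have b0: "0 \<le> b" "b \<le> 1" using ms V0 by (auto simp: b_def)
  define i where "i = max 1 (nat \<lceil>b * real T\<rceil>)"
  have Tpos: "real T > 0" using T1 by simp
  have iT: "i \<le> T"
  proof -
    have "b * real T \<le> real T" using b0 Tpos by (simp add: mult_left_le_one_le)
    then have "\<lceil>b * real T\<rceil> \<le> int T" by (simp add: ceiling_le_iff)
    then show ?thesis unfolding i_def using T1 b0 by auto
  qed
  have i1: "1 \<le> i" unfolding i_def by simp
  have ib: "b \<le> real i / real T"
  proof -
    have "b * real T \<le> of_int \<lceil>b * real T\<rceil>" by linarith
    also have "\<dots> \<le> real (nat \<lceil>b * real T\<rceil>)" by linarith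
    also have "\<dots> \<le> real i" unfolding i_def by simp
    finally have "b * real T \<le> real i" .
    then show ?thesis using Tpos by (simp add: pos_le_divide_eq)
  qed
  have ib2: "real i / real T \<le> b + 1 / real T"
  proof (cases "nat \<lceil>b * real T\<rceil> \<ge> 1")
    case True
    then have "real i = of_int \<lceil>b * real T\<rceil>" unfolding i_def by auto
    also have "\<dots> \<le> b * real T + 1" by linarith
    finally have "real i \<le> b * real T + 1" .
    then show ?thesis using Tpos by (simp add: divide_le_eq add_divide_distrib algebra_simps)
  next
    case False
    then have "i = 1" unfolding i_def by auto
    then show ?thesis using b0 by simp
  qed
  have "\<forall>x\<in>{s..e}. - gA T v m x i \<le> 2 * V + 1 / real T"
  proof
    fix x assume x: "x \<in> {s..e}"
    have vx: "v x \<in> {0..1}" "m x \<in> {0..1}" using hv x se by auto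
    have mxb: "m x \<le> b" using spread[OF x] vx by (auto simp: b_def)
    have mxs: "m x \<ge> m s - V" using spread[OF x] by auto
    show "- gA T v m x i \<le> 2 * V + 1 / real T"
    proof (cases "v x \<ge> m x")
      case True
      have "min (v x) (real i / real T) \<ge> m x" using True mxb ib by auto
      then have "r (min (v x) (real i / real T)) (v x) (m x) = v x - min (v x) (real i / real T)"
        by (simp add: r_def)
      then have "- gA T v m x i = min (v x) (real i / real T) - m x" using True by (simp add: gA_def)
      also have "\<dots> \<le> b + 1 / real T - m x" using ib2 by linarith
      also have "\<dots> \<le> 2 * V + 1 / real T" using mxs b_def by auto
      finally show ?thesis .
    next
      case False
      have "- gA T v m x i \<le> 0" using r_bid_bounds(1)[of "v x" "m x" "real i / real T"] vx False by (simp add: gA_def)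
      then show ?thesis using V0 Tpos by (smt (verit) divide_nonneg_pos)
    qed
  qed
  then show ?thesis unfolding V_def using i1 iT by auto
qed

definition RA :: "nat \<Rightarrow> (nat \<Rightarrow> real) \<Rightarrow> (nat \<Rightarrow> real) \<Rightarrow> nat \<Rightarrow> real" where
  "RA T v m u = measure_pmf.expectation (bidA T v m u) (\<lambda>b. r b (v u) (m u))"

definition regA :: "nat \<Rightarrow> (nat \<Rightarrow> real) \<Rightarrow> (nat \<Rightarrow> real) \<Rightarrow> nat \<Rightarrow> real" where
  "regA T v m u = max (v u - m u) 0 - RA T v m u"

lemma prodState_Suc':
  "prodState T v m t = (s, Vp, w) \<Longrightarrow> prodState T v m (Suc t) =
    (if real (Suc t - s + 1) < sqrt (real T / (Vp + (\<Sum>k\<in>{s<..Suc t}. \<bar>m k - m (k - 1)\<bar>) + 1 / real T))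
     then (s, Vp, \<lambda>i. w i * (1 + (1/2) * gA T v m (Suc t) i))
     else (Suc (Suc t), Vp + (\<Sum>k\<in>{s<..Suc t}. \<bar>m k - m (k - 1)\<bar>), \<lambda>i. 1))"
  by (simp add: gA_def Let_def)

lemma RA_formula:
  assumes T1: "T \<ge> 1" and u: "u \<ge> 1" and st: "prodState T v m (u - 1) = (s, Vp, w)"
    and wpos: "\<And>i. i \<in> {1..T} \<Longrightarrow> w i > 0"
  shows "RA T v m u = (\<Sum>i=1..T. w i * r (min (v u) (real i / real T)) (v u) (m u)) / (\<Sum>j=1..T. w j)"
  unfolding RA_def bidA_def st using wpmf_expect[of T w] T1 wpos by simp

lemma key_sqrt:
  fixes a x e L TT :: real
  assumes "a \<ge> 0" "x \<ge> 0" "e > 0" "L \<ge> 0" "TT \<ge> 0" "L \<le> sqrt (TT / (a + x + e))"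
  shows "L * x \<le> 2 * sqrt TT * (sqrt (a + x + e) - sqrt (a + e))"
proof -
  define p where "p = sqrt (a + x + e)"
  define q where "q = sqrt (a + e)"
  have p0: "p > 0" using assms unfolding p_def by simp
  have q0: "q \<ge> 0" unfolding q_def using assms(1) assms(3) by simp
  have qp: "q \<le> p" unfolding p_def q_def using assms by (simp add: real_sqrt_le_mono)
  have ae: "0 \<le> a + e" using assms(1) assms(3) by linarith
  have axe: "0 \<le> a + x + e" using assms(1,2,3) by linarith
  have xeq: "x = p^2 - q^2" unfolding p_def q_def using ae axe by simp
  have "x = (p - q) * (p + q)" by (simp add: xeq power2_eq_square algebra_simps)
  also have "\<dots> \<le> (p - q) * (2 * p)" by (rule mult_left_mono) (use qp in auto)
  finally have "x \<le> 2 * p * (p - q)" by (simp add: algebra_simps)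
  then have "x \<le> (2 * (p - q)) * p" by (simp add: algebra_simps)
  then have x2: "x / p \<le> 2 * (p - q)" using p0 by (simp add: pos_divide_le_eq)
  have "L \<le> sqrt TT / p" using assms(6) unfolding p_def by (simp add: real_sqrt_divide)
  then have "L * x \<le> sqrt TT / p * x" using assms(2) by (rule mult_right_mono)
  also have "\<dots> = sqrt TT * (x / p)" by simp
  also have "\<dots> \<le> sqrt TT * (2 * (p - q))" using x2 assms(5) by (intro mult_left_mono) auto
  finally show ?thesis unfolding p_def q_def by (simp add: algebra_simps)
qed

lemma ln_factor_lower:
  fixes g :: real
  assumes "-1 \<le> g" "g \<le> 0"
  shows "g \<le> ln (1 + (1/2) * g)"
proof -
  have "\<bar>ln (1 + (1/2) * g) - (1/2) * g\<bar> \<le> 2 * ((1/2) * g)\<^sup>2"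
    using assms by (intro abs_ln_one_plus_x_minus_x_bound_nonpos) auto
  moreover have "(-g) * (-g) \<le> (-g) * 1" using assms by (intro mult_left_mono) auto
  then have "2 * ((1/2) * g)\<^sup>2 \<le> - (1/2) * g" by (simp add: power2_eq_square)
  ultimately show ?thesis by linarith
qed

definition invA :: "nat \<Rightarrow> (nat \<Rightarrow> real) \<Rightarrow> (nat \<Rightarrow> real) \<Rightarrow> nat \<Rightarrow> bool" where
  "invA T v m t = (case prodState T v m t of (s, Vp, w) \<Rightarrow>
    1 \<le> s \<and> s \<le> Suc t \<and>
    (\<forall>i. w i = (\<Prod>x\<in>{s..t}. 1 + (1/2) * gA T v m x i)) \<and>
    0 \<le> Vp \<and> Vp + (\<Sum>k\<in>{s<..t}. \<bar>m k - m (k - 1)\<bar>) \<le> (\<Sum>k\<in>{2..t}. \<bar>m k - m (k - 1)\<bar>) \<and>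
    (s \<le> t \<longrightarrow> real (Suc t - s) < sqrt (real T / (Vp + (\<Sum>k\<in>{s<..t}. \<bar>m k - m (k - 1)\<bar>) + 1 / real T))) \<and>
    (\<Sum>x\<in>{1..<s}. regA T v m x) \<le> 8 * sqrt (real T) * sqrt (Vp + 1 / real T) + 2 * real (s - 1) / real T
        + (2 * ln (real T) + 2) * real (s - 1) * sqrt ((Vp + 1 / real T) / real T) \<and>
    (\<Sum>x\<in>{s..t}. regA T v m x) \<le> 2 * (ln (real T) - ln (\<Sum>i=1..T. w i)))"

lemma invA_0: "T \<ge> 1 \<Longrightarrow> invA T v m 0"
  by (simp add: invA_def)

lemma invA_step:
  fixes T :: nat and v m :: "nat \<Rightarrow> real"
  assumes T1: "T \<ge> 1" and hv: "\<forall>t\<in>{1..T}. v t \<in> {0..1} \<and> m t \<in> {0..1}"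
    and tT: "Suc t \<le> T" and inv: "invA T v m t"
  shows "invA T v m (Suc t)"
proof -
  obtain s Vp w where st: "prodState T v m t = (s, Vp, w)" by (cases "prodState T v m t") auto
  from inv have s1: "1 \<le> s" and sle: "s \<le> Suc t"
    and wprod: "\<And>i. w i = (\<Prod>x\<in>{s..t}. 1 + (1/2) * gA T v m x i)"
    and Vp0: "0 \<le> Vp"
    and cle: "Vp + (\<Sum>k\<in>{s<..t}. \<bar>m k - m (k - 1)\<bar>) \<le> (\<Sum>k\<in>{2..t}. \<bar>m k - m (k - 1)\<bar>)"
    and fcl: "s \<le> t \<Longrightarrow> real (Suc t - s) < sqrt (real T / (Vp + (\<Sum>k\<in>{s<..t}. \<bar>m k - m (k - 1)\<bar>) + 1 / real T))"
    and d1: "(\<Sum>x\<in>{1..<s}. regA T v m x) \<le> 8 * sqrt (real T) * sqrt (Vp + 1 / real T) + 2 * real (s - 1) / real T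
        + (2 * ln (real T) + 2) * real (s - 1) * sqrt ((Vp + 1 / real T) / real T)"
    and d2: "(\<Sum>x\<in>{s..t}. regA T v m x) \<le> 2 * (ln (real T) - ln (\<Sum>i=1..T. w i))"
    by (auto simp: invA_def st)
  define u where "u = Suc t"
  have Tpos: "real T > 0" using T1 by simp
  have hvx: "v x \<in> {0..1}" "m x \<in> {0..1}" if "x \<in> {1..T}" for x using hv that by auto
  have gb: "-1 \<le> gA T v m x i" "gA T v m x i \<le> 0" if "x \<in> {1..T}" for x i
    using gA_bounds[of v x m T i] hvx[OF that] by auto
  have fpos: "1 + (1/2) * gA T v m x i > 0" if "x \<in> {1..T}" for x i using gb[OF that, of i] by linarith
  have wpos: "w i > 0" for i
    unfolding wprod[of i] apply (intro prod_pos ballI fpos) using s1 tT by auto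
  define W where "W = (\<Sum>i=1..T. w i)"
  have Wpos: "W > 0" unfolding W_def using T1 wpos by (intro sum_pos) auto
  have uT: "u \<in> {1..T}" using tT u_def by auto
  define rr where "rr = (\<lambda>i. r (min (v u) (real i / real T)) (v u) (m u))"
  define mu where "mu = max (v u - m u) 0"
  have RAf: "RA T v m u = (\<Sum>i=1..T. w i * rr i) / W"
    unfolding rr_def W_def using RA_formula[of T u v m s Vp w] T1 st wpos u_def by simp
  have reg_eq: "regA T v m u = - (\<Sum>i=1..T. w i * gA T v m u i) / W"
  proof -
    have "regA T v m u = mu - (\<Sum>i=1..T. w i * rr i) / W" unfolding regA_def RAf mu_def by simp
    also have "\<dots> = (mu * W - (\<Sum>i=1..T. w i * rr i)) / W" using Wpos by (simp add: field_simps)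
    also have "mu * W = (\<Sum>i=1..T. w i * mu)" unfolding W_def by (simp add: sum_distrib_left mult.commute)
    also have "(\<Sum>i=1..T. w i * mu) - (\<Sum>i=1..T. w i * rr i) = - (\<Sum>i=1..T. w i * gA T v m u i)"
      by (simp add: gA_def rr_def mu_def sum_subtractf[symmetric] algebra_simps flip: sum_negf)
    finally show ?thesis .
  qed
  have sg1: "(\<Sum>i=1..T. w i * gA T v m u i) \<le> 0"
    using wpos gb[OF uT] by (intro sum_nonpos) (simp add: mult_nonneg_nonpos less_imp_le)
  have sg2: "(\<Sum>i=1..T. w i * gA T v m u i) \<ge> - W"
  proof -
    have "(\<Sum>i=1..T. w i * gA T v m u i) \<ge> (\<Sum>i=1..T. - w i)"
      
    proof (intro sum_mono)
      fix i assume "i \<in> {1..T}"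
      have "w i * (-1) \<le> w i * gA T v m u i" using wpos[of i] gb(1)[OF uT, of i] by (intro mult_left_mono) auto
      then show "- w i \<le> w i * gA T v m u i" by simp
    qed
    then show ?thesis unfolding W_def by (simp add: sum_negf)
  qed
  have reg0: "0 \<le> regA T v m u" unfolding reg_eq using sg1 Wpos by (simp add: divide_nonpos_pos)
  have reg1: "regA T v m u \<le> 1" unfolding reg_eq using sg2 Wpos by (simp add: le_divide_eq)
  define w' where "w' = (\<lambda>i. w i * (1 + (1/2) * gA T v m u i))"
  have W'eq: "(\<Sum>i=1..T. w' i) = W * (1 - regA T v m u / 2)"
  proof -
    have "(\<Sum>i=1..T. w' i) = W + (1/2) * (\<Sum>i=1..T. w i * gA T v m u i)"
      unfolding w'_def W_def by (simp add: algebra_simps sum.distrib sum_distrib_left)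
    also have "(\<Sum>i=1..T. w i * gA T v m u i) = - regA T v m u * W" unfolding reg_eq using Wpos by simp
    finally show ?thesis by (simp add: algebra_simps)
  qed
  have lnW': "ln (\<Sum>i=1..T. w' i) \<le> ln W - regA T v m u / 2"
  proof -
    have p: "1 - regA T v m u / 2 > 0" using reg1 by simp
    have "ln (\<Sum>i=1..T. w' i) = ln W + ln (1 - regA T v m u / 2)" unfolding W'eq using Wpos p by (simp add: ln_mult)
    also have "ln (1 - regA T v m u / 2) \<le> (1 - regA T v m u / 2) - 1" using p by (rule ln_le_minus_one)
    finally show ?thesis by simp
  qed
  have d2': "(\<Sum>x\<in>{s..u}. regA T v m x) \<le> 2 * (ln (real T) - ln (\<Sum>i=1..T. w' i))"
  proof -
    have "(\<Sum>x\<in>{s..u}. regA T v m x) = (\<Sum>x\<in>{s..t}. regA T v m x) + regA T v m u"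
      unfolding u_def using sle by (simp add: sum.cl_ivl_Suc)
    moreover have "2 * (ln (real T) - ln W) + regA T v m u \<le> 2 * (ln (real T) - ln (\<Sum>i=1..T. w' i))"
      using lnW' by argo
    ultimately show ?thesis using d2 unfolding W_def by argo
  qed
  have w'prod: "w' i = (\<Prod>x\<in>{s..u}. 1 + (1/2) * gA T v m x i)" for i
    unfolding w'_def wprod[of i] u_def using sle by (simp add: prod.cl_ivl_Suc)
  have w'pos: "w' i > 0" for i
    unfolding w'prod[of i] apply (intro prod_pos ballI fpos) using s1 tT u_def by auto
  have lnw': "ln (\<Sum>j=1..T. w' j) \<ge> (\<Sum>x\<in>{s..u}. gA T v m x i)" if iT: "i \<in> {1..T}" for i
  proof -
    have "ln (w' i) \<le> ln (\<Sum>j=1..T. w' j)"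
    proof (subst ln_le_cancel_iff)
      show "0 < w' i" by (rule w'pos)
      show "0 < (\<Sum>j=1..T. w' j)" using iT w'pos by (intro sum_pos) auto
      show "w' i \<le> (\<Sum>j=1..T. w' j)" using iT w'pos by (intro member_le_sum) (auto intro: less_imp_le)
    qed
    moreover have "ln (w' i) = (\<Sum>x\<in>{s..u}. ln (1 + (1/2) * gA T v m x i))"
      unfolding w'prod[of i] apply (intro ln_prod) apply simp
      subgoal for x using fpos[of x i] s1 tT u_def by auto
      done
    moreover have "(\<Sum>x\<in>{s..u}. gA T v m x i) \<le> (\<Sum>x\<in>{s..u}. ln (1 + (1/2) * gA T v m x i))"
      using s1 tT u_def by (intro sum_mono ln_factor_lower gb) auto
    ultimately show ?thesis by linarith
  qed
  have dvsum: "(\<Sum>k\<in>{s<..u}. \<bar>m k - m (k - 1)\<bar>) = (\<Sum>k\<in>{s<..t}. \<bar>m k - m (k - 1)\<bar>) + (if s \<le> t then \<bar>m u - m (u - 1)\<bar> else 0)"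
  proof (cases "s \<le> t")
    case True
    then have "{s<..u} = insert u {s<..t}" unfolding u_def by auto
    then show ?thesis using True by (simp add: u_def)
  next
    case False
    then show ?thesis using sle unfolding u_def by auto
  qed
  have dvsum2: "(\<Sum>k\<in>{2..u}. \<bar>m k - m (k - 1)\<bar>) = (\<Sum>k\<in>{2..t}. \<bar>m k - m (k - 1)\<bar>) + (if 1 \<le> t then \<bar>m u - m (u - 1)\<bar> else 0)"
  proof (cases "1 \<le> t")
    case True
    then have "{2..u} = insert u {2..t}" unfolding u_def by auto
    then show ?thesis using True by (simp add: u_def)
  next
    case False
    then show ?thesis unfolding u_def by auto
  qed
  have c': "Vp + (\<Sum>k\<in>{s<..u}. \<bar>m k - m (k - 1)\<bar>) \<le> (\<Sum>k\<in>{2..u}. \<bar>m k - m (k - 1)\<bar>)"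
    unfolding dvsum dvsum2 using cle s1 by auto
  define Vc where "Vc = (\<Sum>k\<in>{s<..u}. \<bar>m k - m (k - 1)\<bar>)"
  define Vm where "Vm = (\<Sum>k\<in>{s<..t}. \<bar>m k - m (k - 1)\<bar>)"
  have Vm0: "0 \<le> Vm" unfolding Vm_def by (intro sum_nonneg) auto
  have VmVc: "Vm \<le> Vc" unfolding Vc_def Vm_def dvsum by auto
  have Vc0: "0 \<le> Vc" using Vm0 VmVc by linarith
  have ps: "prodState T v m (Suc t) =
    (if real (u - s + 1) < sqrt (real T / (Vp + Vc + 1 / real T))
     then (s, Vp, w') else (Suc u, Vp + Vc, \<lambda>i. 1))"
    unfolding prodState_Suc'[OF st] u_def Vc_def w'_def by simp
  show ?thesis
  proof (cases "real (u - s + 1) < sqrt (real T / (Vp + Vc + 1 / real T))")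
    case True
    have st': "prodState T v m (Suc t) = (s, Vp, w')" using ps True by simp
    have f': "real (Suc u - s) < sqrt (real T / (Vp + Vc + 1 / real T))" using True sle u_def
      by (simp add: Suc_diff_le)
    have sleu: "s \<le> Suc u" using sle u_def by simp
    have st'u: "prodState T v m u = (s, Vp, w')" using st' u_def by simp
    show ?thesis unfolding u_def[symmetric] invA_def st'u prod.case
      using s1 sleu w'prod Vp0 c' d1 d2' f' unfolding Vc_def by blast

  next
    case False
    have st'u: "prodState T v m u = (Suc u, Vp + Vc, \<lambda>i. 1)" using ps False u_def by simp
    define X where "X = Vp + Vc + 1 / real T"
    have eps: "1 / real T > 0" using Tpos by simp
    have Xpos: "X > 0" unfolding X_def using Vp0 Vc0 eps by linarith
    define l where "l = real (u - s + 1)"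
    have Rcond: "sqrt (real T / X) \<le> l" using False unfolding X_def l_def by simp
    have one: "1 \<le> l * sqrt (X / real T)"
    proof -
      have "sqrt (real T / X) * sqrt (X / real T) = 1"
        using Xpos Tpos by (simp add: real_sqrt_mult[symmetric])
      moreover have "sqrt (real T / X) * sqrt (X / real T) \<le> l * sqrt (X / real T)"
        using Rcond Xpos Tpos by (intro mult_right_mono) auto
      ultimately show ?thesis by simp
    qed
    have keyb: "real (u - s) * Vm \<le> 2 * sqrt (real T) * (sqrt (Vp + Vm + 1 / real T) - sqrt (Vp + 1 / real T))"
    proof (cases "s \<le> t")
      case True
      have "real (Suc t - s) < sqrt (real T / (Vp + Vm + 1 / real T))" using fcl[OF True] unfolding Vm_def .
      then show ?thesis unfolding u_def using Vp0 Vm0 Tpos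
        by (intro key_sqrt) auto
    next
      case False
      then have "s = u" using sle u_def by simp
      moreover have "Vm = 0" unfolding Vm_def using False by simp
      ultimately show ?thesis by simp
    qed
    have comp: "\<exists>i\<in>{1..T}. (\<Sum>x\<in>{s..u}. - gA T v m x i) \<le> 1 + real (u - s) * (2 * Vm + 1 / real T)"
    proof (cases "s \<le> t")
      case True
      obtain i where iT: "i \<in> {1..T}" and ib: "\<forall>x\<in>{s..t}. - gA T v m x i \<le> 2 * Vm + 1 / real T"
        using spread_comparator[OF T1 hv s1 True] tT unfolding Vm_def by auto
      have "(\<Sum>x\<in>{s..u}. - gA T v m x i) = (\<Sum>x\<in>{s..t}. - gA T v m x i) + (- gA T v m u i)"
        unfolding u_def using sle by (simp add: sum.cl_ivl_Suc)
      also have "(\<Sum>x\<in>{s..t}. - gA T v m x i) \<le> (\<Sum>x\<in>{s..t}. 2 * Vm + 1 / real T)"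
        using ib by (intro sum_mono) auto
      also have "\<dots> = real (u - s) * (2 * Vm + 1 / real T)" unfolding u_def using True by simp
      also have "- gA T v m u i \<le> 1" using gb(1)[OF uT, of i] by simp
      finally show ?thesis using iT by (auto simp: algebra_simps)
    next
      case False
      then have su: "s = u" using sle u_def by simp
      have "(\<Sum>x\<in>{s..u}. - gA T v m x 1) \<le> 1" unfolding su using gb(1)[OF uT, of 1] by simp
      then show ?thesis using T1 su by (intro bexI[of _ 1]) auto
    qed
    then obtain i where iT: "i \<in> {1..T}" and ci: "(\<Sum>x\<in>{s..u}. - gA T v m x i) \<le> 1 + real (u - s) * (2 * Vm + 1 / real T)"
      by blast
    have B1: "(\<Sum>x\<in>{s..u}. regA T v m x) \<le> 2 * ln (real T) + 2 * (\<Sum>x\<in>{s..u}. - gA T v m x i)"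
      using d2' lnw'[OF iT] by (simp add: sum_negf)
    have sqm: "sqrt (Vp + Vm + 1 / real T) \<le> sqrt X" unfolding X_def using VmVc by simp
    define Q where "Q = sqrt (Vp + 1 / real T)"
    define P where "P = real (u - s) * Vm"
    define S1 where "S1 = sqrt (real T) * (sqrt (Vp + Vm + 1 / real T) - Q)"
    define S2 where "S2 = sqrt (real T) * (sqrt X - Q)"
    have keyb': "P \<le> 2 * S1" using keyb unfolding P_def S1_def Q_def by (simp add: algebra_simps)
    have S12: "S1 \<le> S2" unfolding S1_def S2_def using sqm by (intro mult_left_mono) auto
    have lu: "l = real (u - s) + 1" unfolding l_def using sle u_def by simp
    have ci': "(\<Sum>x\<in>{s..u}. - gA T v m x i) \<le> 1 + 2 * P + real (u - s) / real T"
      using ci unfolding P_def by (simp add: algebra_simps)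
    have lT: "real (u - s) / real T \<le> l / real T" unfolding lu using Tpos by (simp add: divide_right_mono)
    have B2: "(\<Sum>x\<in>{s..u}. regA T v m x) \<le> 2 * ln (real T) + 2 + 8 * S2 + 2 * (l / real T)"
      using B1 ci' keyb' S12 lT by linarith
    define K where "K = 2 * ln (real T) + 2"
    have K0: "K \<ge> 0" unfolding K_def using T1 by simp
    define a where "a = real (s - 1)"
    have a0: "a \<ge> 0" unfolding a_def by simp
    have ua: "real (Suc u - 1) = a + l" unfolding a_def l_def using s1 sle u_def by simp
    have RR: "sqrt ((Vp + 1 / real T) / real T) \<le> sqrt (X / real T)"
      unfolding X_def using Vc0 Tpos by (simp add: divide_right_mono)
    have QQ: "sqrt (Vp + 1 / real T) \<le> sqrt X" unfolding X_def using Vc0 by simp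
    have m1: "K * a * sqrt ((Vp + 1 / real T) / real T) \<le> K * a * sqrt (X / real T)"
      using RR K0 a0 by (intro mult_left_mono) auto
    have m2: "K \<le> K * (l * sqrt (X / real T))" using one K0 by (simp add: mult_le_cancel_left1)
    have split: "{1..<Suc u} = {1..<s} \<union> {s..u}" using s1 sle u_def by auto
    have sumsplit: "(\<Sum>x\<in>{1..<Suc u}. regA T v m x) = (\<Sum>x\<in>{1..<s}. regA T v m x) + (\<Sum>x\<in>{s..u}. regA T v m x)"
      unfolding split by (subst sum.union_disjoint) auto
    have d1new: "(\<Sum>x\<in>{1..<Suc u}. regA T v m x) \<le> 8 * sqrt (real T) * sqrt X + 2 * real (Suc u - 1) / real T
        + (2 * ln (real T) + 2) * real (Suc u - 1) * sqrt (X / real T)"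
    proof -
      have e1: "2 * (a + l) / real T = 2 * a / real T + 2 * l / real T" by (simp add: add_divide_distrib)
      have e2: "K * (a + l) * sqrt (X / real T) = K * a * sqrt (X / real T) + K * (l * sqrt (X / real T))"
        by (simp add: algebra_simps)
      have e3: "8 * sqrt (real T) * sqrt X = 8 * sqrt (real T) * Q + 8 * S2" unfolding S2_def by (simp add: algebra_simps)
      have e4: "2 * (l / real T) = 2 * l / real T" by simp
      have d1': "(\<Sum>x\<in>{1..<s}. regA T v m x) \<le> 8 * sqrt (real T) * Q + 2 * a / real T + K * a * sqrt ((Vp + 1 / real T) / real T)"
        using d1 unfolding a_def K_def Q_def .
      show ?thesis unfolding sumsplit ua K_def[symmetric] e1 e2 e3
        using d1' B2 m1 m2 e4 K_def by linarith
    qed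
    have sumT: "(\<Sum>i=1..T. (1::real)) = real T" by simp
    show ?thesis unfolding u_def[symmetric] invA_def st'u prod.case
      using d1new c' Vp0 Vc0 sumT unfolding X_def Vc_def by auto

  qed
qed

lemma invA_all:
  fixes T :: nat and v m :: "nat \<Rightarrow> real"
  assumes T1: "T \<ge> 1" and hv: "\<forall>t\<in>{1..T}. v t \<in> {0..1} \<and> m t \<in> {0..1}"
  shows "t \<le> T \<Longrightarrow> invA T v m t"
proof (induction t)
  case 0 then show ?case using invA_0[OF T1] by simp
next
  case (Suc t) then show ?case using invA_step[OF T1 hv] by simp
qed

lemma regA_total:
  fixes T :: nat and v m :: "nat \<Rightarrow> real"
  assumes T1: "T \<ge> 1" and hv: "\<forall>t\<in>{1..T}. v t \<in> {0..1} \<and> m t \<in> {0..1}"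
  shows "(\<Sum>u=1..T. regA T v m u) \<le> (2 * ln (real T) + 18) * sqrt (real T) * sqrt (VT m T + 1 / real T) + 2 * ln (real T) + 4"
proof -
  obtain s Vp w where st: "prodState T v m T = (s, Vp, w)" by (cases "prodState T v m T") auto
  from invA_all[OF T1 hv order.refl] have s1: "1 \<le> s" and sle: "s \<le> Suc T"
    and wprod: "\<And>i. w i = (\<Prod>x\<in>{s..T}. 1 + (1/2) * gA T v m x i)"
    and Vp0: "0 \<le> Vp"
    and cle: "Vp + (\<Sum>k\<in>{s<..T}. \<bar>m k - m (k - 1)\<bar>) \<le> (\<Sum>k\<in>{2..T}. \<bar>m k - m (k - 1)\<bar>)"
    and fcl: "s \<le> T \<Longrightarrow> real (Suc T - s) < sqrt (real T / (Vp + (\<Sum>k\<in>{s<..T}. \<bar>m k - m (k - 1)\<bar>) + 1 / real T))"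
    and d1: "(\<Sum>x\<in>{1..<s}. regA T v m x) \<le> 8 * sqrt (real T) * sqrt (Vp + 1 / real T) + 2 * real (s - 1) / real T
        + (2 * ln (real T) + 2) * real (s - 1) * sqrt ((Vp + 1 / real T) / real T)"
    and d2: "(\<Sum>x\<in>{s..T}. regA T v m x) \<le> 2 * (ln (real T) - ln (\<Sum>i=1..T. w i))"
    by (auto simp: invA_def st)
  define S where "S = VT m T"
  define Vc where "Vc = (\<Sum>k\<in>{s<..T}. \<bar>m k - m (k - 1)\<bar>)"
  define K where "K = 2 * ln (real T) + 2"
  have Tpos: "real T > 0" using T1 by simp
  have eps: "1 / real T > 0" using Tpos by simp
  have K0: "K \<ge> 0" unfolding K_def using T1 by simp
  have Vc0: "0 \<le> Vc" unfolding Vc_def by (intro sum_nonneg) auto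
  have VpS: "Vp + Vc \<le> S" using cle unfolding S_def VT_def Vc_def .
  have VpS': "Vp \<le> S" using VpS Vc0 by linarith
  have S0: "0 \<le> S" using Vp0 VpS' by linarith
  have sqS: "sqrt (Vp + 1 / real T) \<le> sqrt (S + 1 / real T)" using VpS' by simp
  have hvx: "v x \<in> {0..1}" "m x \<in> {0..1}" if "x \<in> {1..T}" for x using hv that by auto
  have gb: "-1 \<le> gA T v m x i" "gA T v m x i \<le> 0" if "x \<in> {1..T}" for x i
    using gA_bounds[of v x m T i] hvx[OF that] by auto
  have fpos: "1 + (1/2) * gA T v m x i > 0" if "x \<in> {1..T}" for x i using gb[OF that, of i] by linarith
  have part1: "(\<Sum>x\<in>{1..<s}. regA T v m x) \<le> (8 + K) * sqrt (real T) * sqrt (S + 1 / real T) + 2"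
  proof -
    have a: "real (s - 1) \<le> real T" using sle by simp
    have "2 * real (s - 1) / real T \<le> 2" using a Tpos by (simp add: divide_le_eq)
    moreover have "K * real (s - 1) * sqrt ((Vp + 1 / real T) / real T) \<le> K * real T * sqrt ((S + 1 / real T) / real T)"
    proof (intro mult_mono)
      show "sqrt ((Vp + 1 / real T) / real T) \<le> sqrt ((S + 1 / real T) / real T)"
        using VpS' Tpos by (simp add: divide_right_mono)
      show "0 \<le> sqrt ((Vp + 1 / real T) / real T)" using Vp0 eps Tpos by simp
    qed (use a K0 in auto)
    moreover have "real T * sqrt ((S + 1 / real T) / real T) = sqrt (real T) * sqrt (S + 1 / real T)"
    proof -
      have "real T = sqrt (real T) * sqrt (real T)" using Tpos by simp
      then have "real T * sqrt ((S + 1 / real T) / real T) = sqrt (real T) * (sqrt (real T) * sqrt ((S + 1 / real T) / real T))"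
        by (metis mult.assoc)
      also have "sqrt (real T) * sqrt ((S + 1 / real T) / real T) = sqrt (S + 1 / real T)"
        using Tpos by (simp add: real_sqrt_mult[symmetric])
      finally show ?thesis .
    qed
    moreover have "8 * sqrt (real T) * sqrt (Vp + 1 / real T) \<le> 8 * sqrt (real T) * sqrt (S + 1 / real T)"
      using sqS by (intro mult_left_mono) auto
    ultimately show ?thesis using d1 unfolding K_def[symmetric] by (simp add: algebra_simps)
  qed
  have part2: "(\<Sum>x\<in>{s..T}. regA T v m x) \<le> 8 * sqrt (real T) * sqrt (S + 1 / real T) + 2 * ln (real T) + 2"
  proof (cases "s \<le> T")
    case False
    then have "{s..T} = {}" by auto
    then show ?thesis using T1 S0 by simp
  next
    case True
    obtain i where iT: "i \<in> {1..T}" and ib: "\<forall>x\<in>{s..T}. - gA T v m x i \<le> 2 * Vc + 1 / real T"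
      using spread_comparator[OF T1 hv s1 True order.refl] unfolding Vc_def by auto
    have wpos: "w j > 0" for j
      unfolding wprod[of j] apply (intro prod_pos ballI fpos) using s1 by auto
    have lnw: "ln (\<Sum>j=1..T. w j) \<ge> (\<Sum>x\<in>{s..T}. gA T v m x i)"
    proof -
      have "ln (w i) \<le> ln (\<Sum>j=1..T. w j)"
      proof (subst ln_le_cancel_iff)
        show "0 < w i" by (rule wpos)
        show "0 < (\<Sum>j=1..T. w j)" using iT wpos by (intro sum_pos) auto
        show "w i \<le> (\<Sum>j=1..T. w j)" using iT wpos by (intro member_le_sum) (auto intro: less_imp_le)
      qed
      moreover have "ln (w i) = (\<Sum>x\<in>{s..T}. ln (1 + (1/2) * gA T v m x i))"
        unfolding wprod[of i] apply (intro ln_prod) apply simp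
        subgoal for x using fpos[of x i] s1 by auto
        done
      moreover have "(\<Sum>x\<in>{s..T}. gA T v m x i) \<le> (\<Sum>x\<in>{s..T}. ln (1 + (1/2) * gA T v m x i))"
        using s1 by (intro sum_mono ln_factor_lower gb) auto
      ultimately show ?thesis by linarith
    qed
    define D where "D = real (Suc T - s)"
    have DT: "D \<le> real T" unfolding D_def using s1 by simp
    have sumg: "(\<Sum>x\<in>{s..T}. - gA T v m x i) \<le> D * (2 * Vc + 1 / real T)"
    proof -
      have "(\<Sum>x\<in>{s..T}. - gA T v m x i) \<le> (\<Sum>x\<in>{s..T}. 2 * Vc + 1 / real T)" using ib by (intro sum_mono) auto
      then show ?thesis unfolding D_def by simp
    qed
    have key: "D * Vc \<le> 2 * sqrt (real T) * (sqrt (Vp + Vc + 1 / real T) - sqrt (Vp + 1 / real T))"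
      using fcl[OF True] Vp0 Vc0 eps unfolding D_def Vc_def[symmetric]
      by (intro key_sqrt) auto
    have key2: "2 * sqrt (real T) * (sqrt (Vp + Vc + 1 / real T) - sqrt (Vp + 1 / real T)) \<le> 2 * sqrt (real T) * sqrt (S + 1 / real T)"
    proof -
      have "sqrt (Vp + Vc + 1 / real T) \<le> sqrt (S + 1 / real T)" using VpS by simp
      moreover have "0 \<le> sqrt (Vp + 1 / real T)" using Vp0 eps by simp
      ultimately have "sqrt (Vp + Vc + 1 / real T) - sqrt (Vp + 1 / real T) \<le> sqrt (S + 1 / real T)" by linarith
      then show ?thesis by (intro mult_left_mono) auto
    qed
    have DT2: "D * (1 / real T) \<le> 1" using DT Tpos by (simp add: divide_le_eq)
    have e: "D * (2 * Vc + 1 / real T) = 2 * (D * Vc) + D * (1 / real T)" by (simp add: algebra_simps)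
    have "(\<Sum>x\<in>{s..T}. regA T v m x) \<le> 2 * ln (real T) + 2 * (\<Sum>x\<in>{s..T}. - gA T v m x i)"
      using d2 lnw by (simp add: sum_negf)
    then show ?thesis using sumg key key2 DT2 e by linarith
  qed
  have split: "{1..T} = {1..<s} \<union> {s..T}" using s1 sle by auto
  have "(\<Sum>u=1..T. regA T v m u) = (\<Sum>x\<in>{1..<s}. regA T v m x) + (\<Sum>x\<in>{s..T}. regA T v m x)"
    unfolding split by (subst sum.union_disjoint) auto
  then show ?thesis using part1 part2 unfolding K_def S_def by (simp add: algebra_simps)
qed

definition RB :: "nat \<Rightarrow> real \<Rightarrow> (nat \<Rightarrow> real) \<Rightarrow> (nat \<Rightarrow> real) \<Rightarrow> nat \<Rightarrow> real" where
  "RB NB eta v m u = measure_pmf.expectation (bidB NB eta v m u) (\<lambda>b. r b (v u) (m u))"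

lemma omdStart_props:
  "t \<ge> 1 \<Longrightarrow> 1 \<le> omdStart m t \<and> omdStart m t \<le> t \<and> (\<forall>s. omdStart m t < s \<and> s < t \<longrightarrow> m s = m (s - 1))"
proof (induction t)
  case 0 then show ?case by simp
next
  case (Suc t)
  show ?case
  proof (cases "t = 0")
    case True then show ?thesis by simp
  next
    case False
    then have IH: "1 \<le> omdStart m t" "omdStart m t \<le> t" "\<forall>s. omdStart m t < s \<and> s < t \<longrightarrow> m s = m (s - 1)"
      using Suc.IH by auto
    show ?thesis
    proof (cases "t \<noteq> omdStart m t \<and> m t \<noteq> m (t - 1)")
      case True
      then show ?thesis using False by (simp add: Let_def)
    next
      case nr: False
      have eq: "omdStart m (Suc t) = omdStart m t" using False nr by (auto simp: Let_def)
      have "\<forall>s. omdStart m t < s \<and> s < Suc t \<longrightarrow> m s = m (s - 1)"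
      proof (intro allI impI)
        fix s assume s: "omdStart m t < s \<and> s < Suc t"
        show "m s = m (s - 1)"
        proof (cases "s = t")
          case True then show ?thesis using s nr by auto
        next
          case False then show ?thesis using s IH(3) by auto
        qed
      qed
      then show ?thesis unfolding eq using IH by auto
    qed
  qed
qed

lemma const_chain:
  fixes m :: "nat \<Rightarrow> real"
  assumes "\<forall>s. a < s \<and> s \<le> b \<longrightarrow> m s = m (s - 1)"
  shows "a \<le> x \<Longrightarrow> x \<le> b \<Longrightarrow> m x = m a"
proof (induction x)
  case 0 then show ?case by simp
next
  case (Suc x)
  show ?case
  proof (cases "a = Suc x")
    case True then show ?thesis by simp
  next
    case False
    then have "a \<le> x" using Suc.prems by simp
    then have "m x = m a" using Suc.IH Suc.prems by simp
    moreover have "m (Suc x) = m x" using assms Suc.prems False by (metis diff_Suc_1 le_neq_implies_less)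
    ultimately show ?thesis by simp
  qed
qed

lemma good_round:
  fixes T N :: nat and eta :: real and v m :: "nat \<Rightarrow> real"
  assumes N1: "N \<ge> 1" and eta0: "eta > 0" and hv: "\<forall>t\<in>{1..T}. v t \<in> {0..1} \<and> m t \<in> {0..1}"
    and t: "t \<in> {1..T}" and good: "m t = m (t - 1)"
  shows "max (v t - m t) 0 - RB N eta v m t \<le> 1 / real N + real N / eta"
proof -
  define t0 where "t0 = omdStart m t"
  have t0p: "1 \<le> t0" "t0 \<le> t" "\<forall>s. t0 < s \<and> s < t \<longrightarrow> m s = m (s - 1)"
    using omdStart_props[of t m] t unfolding t0_def by auto
  define M where "M = m t"
  have ch: "\<forall>s. t0 < s \<and> s \<le> t \<longrightarrow> m s = m (s - 1)"
    using t0p(3) good by (metis le_neq_implies_less)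
  have mconst: "m s = M" if "s \<in> {t0..t}" for s
    using const_chain[OF ch, of s] const_chain[OF ch, of t] that t0p unfolding M_def by auto
  have mhint: "m (t - 1) = M" using good unfolding M_def by simp
  have NP: "real N > 0" using N1 by simp
  define rho where "rho = (\<lambda>s i. r (min (v s) (real i / real N)) (v s) M)"
  define H where "H = (\<lambda>i. \<Sum>s\<in>{t0..t}. rho s i)"
  have Heq: "(\<Sum>s\<in>{t0..<t}. r (min (v s) (real i / real N)) (v s) (m s)) + r (min (v t) (real i / real N)) (v t) (m (t - 1)) = H i" for i
  proof -
    have "(\<Sum>s\<in>{t0..<t}. r (min (v s) (real i / real N)) (v s) (m s)) = (\<Sum>s\<in>{t0..<t}. rho s i)"
      unfolding rho_def using mconst by (intro sum.cong) auto
    moreover have "{t0..t} = insert t {t0..<t}" using t0p by auto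
    ultimately show ?thesis unfolding H_def rho_def mhint by simp
  qed
  define ew where "ew = (\<lambda>i. exp (eta * H i))"
  have bidB_eq: "bidB N eta v m t = map_pmf (\<lambda>i. min (v t) (real i / real N)) (wpmf N ew)"
    unfolding bidB_def ew_def t0_def[symmetric] Heq by simp
  have ewpos: "\<And>i. i \<in> {1..N} \<Longrightarrow> ew i > 0" unfolding ew_def by simp
  define Z where "Z = (\<Sum>j=1..N. ew j)"
  have Zpos: "Z > 0" unfolding Z_def using N1 ewpos by (intro sum_pos) auto
  have RBeq: "RB N eta v m t = (\<Sum>i=1..N. ew i * rho t i) / Z"
    unfolding RB_def bidB_eq Z_def using wpmf_expect[of N ew] N1 ewpos by (simp add: rho_def M_def)
  have Mb: "M \<in> {0..1}" using hv t unfolding M_def by auto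
  define istar where "istar = max 1 (nat \<lceil>M * real N\<rceil>)"
  have is1: "1 \<le> istar" unfolding istar_def by simp
  have isN: "istar \<le> N"
  proof -
    have "M * real N \<le> real N" using Mb NP by (simp add: mult_left_le_one_le)
    then have "\<lceil>M * real N\<rceil> \<le> int N" by (simp add: ceiling_le_iff)
    then show ?thesis unfolding istar_def using N1 Mb by auto
  qed
  have isb: "M \<le> real istar / real N"
  proof -
    have "M * real N \<le> of_int \<lceil>M * real N\<rceil>" by linarith
    also have "\<dots> \<le> real (nat \<lceil>M * real N\<rceil>)" by linarith
    also have "\<dots> \<le> real istar" unfolding istar_def by simp
    finally show ?thesis using NP by (simp add: pos_le_divide_eq)
  qed
  have isb2: "real istar / real N \<le> M + 1 / real N"
  proof (cases "nat \<lceil>M * real N\<rceil> \<ge> 1")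
    case True
    then have "real istar = of_int \<lceil>M * real N\<rceil>" unfolding istar_def by auto
    also have "\<dots> \<le> M * real N + 1" by linarith
    finally have "real istar \<le> M * real N + 1" .
    then show ?thesis using NP by (simp add: divide_le_eq add_divide_distrib algebra_simps)
  next
    case False
    then have "istar = 1" unfolding istar_def by auto
    then show ?thesis using Mb by simp
  qed
  have best: "rho s i \<le> rho s istar" if i: "i \<in> {1..N}" for s i
  proof (cases "v s \<ge> M")
    case False
    then show ?thesis unfolding rho_def r_def by auto
  next
    case True
    have st: "min (v s) (real istar / real N) \<ge> M" using True isb by simp
    have rs: "rho s istar = v s - min (v s) (real istar / real N)" unfolding rho_def r_def using st by simp
    show ?thesis
    proof (cases "min (v s) (real i / real N) \<ge> M")
      case True
      then have "real i / real N \<ge> M" by simp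
      then have "real i \<ge> M * real N" using NP by (simp add: pos_le_divide_eq)
      then have "\<lceil>M * real N\<rceil> \<le> int i" by (simp add: ceiling_le_iff)
      then have "istar \<le> i" unfolding istar_def using i by (simp add: nat_le_iff)
      then have "real istar / real N \<le> real i / real N" using NP by (simp add: divide_right_mono)
      then show ?thesis unfolding rs unfolding rho_def r_def using True by auto
    next
      case False
      then show ?thesis unfolding rs unfolding rho_def r_def by auto
    qed
  qed
  have rho_is: "rho t istar \<ge> max (v t - m t) 0 - 1 / real N"
  proof (cases "v t \<ge> M")
    case False
    have "rho t istar \<ge> 0" unfolding rho_def r_def using False by auto
    moreover have "1 / real N > 0" using NP by simp
    moreover have "max (v t - m t) 0 = 0" using False unfolding M_def by auto
    ultimately show ?thesis by linarith
  next
    case True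
    have st: "min (v t) (real istar / real N) \<ge> M" using True isb by simp
    then have "rho t istar = v t - min (v t) (real istar / real N)" unfolding rho_def r_def by simp
    then show ?thesis using True isb2 unfolding M_def by auto
  qed
  have tt0: "t \<in> {t0..t}" using t0p by auto
  have diffH: "rho t istar - rho t i \<le> H istar - H i" if i: "i \<in> {1..N}" for i
  proof -
    have "H istar - H i = (\<Sum>s\<in>{t0..t}. rho s istar - rho s i)" unfolding H_def by (simp add: sum_subtractf)
    also have "\<dots> \<ge> rho t istar - rho t i"
      using best[OF i] tt0 by (intro member_le_sum[where f="\<lambda>s. rho s istar - rho s i", OF tt0]) auto
    finally show ?thesis .
  qed
  have Hnonneg: "H istar - H i \<ge> 0" if i: "i \<in> {1..N}" for i
    unfolding H_def using best[OF i] by (simp add: sum_subtractf[symmetric] sum_nonneg)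
  have Zge: "Z \<ge> ew istar" unfolding Z_def using is1 isN ewpos by (intro member_le_sum) (auto intro: less_imp_le)
  have trm: "ew i / Z * (H istar - H i) \<le> 1 / eta" if i: "i \<in> {1..N}" for i
  proof -
    define y where "y = H istar - H i"
    have y0: "y \<ge> 0" unfolding y_def using Hnonneg[OF i] .
    have eis: "ew istar > 0" using ewpos is1 isN by auto
    have "ew i / Z \<le> ew i / ew istar" using Zge ewpos[OF i] eis Zpos
      by (intro divide_left_mono) auto
    also have "ew i / ew istar = exp (- (eta * y))" unfolding ew_def y_def by (simp add: exp_diff[symmetric] algebra_simps)
    finally have q: "ew i / Z \<le> exp (- (eta * y))" .
    have "ew i / Z * y \<le> exp (- (eta * y)) * y" using q y0 by (intro mult_right_mono) auto
    also have "exp (- (eta * y)) * y \<le> 1 / eta"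
    proof -
      have "eta * y \<le> exp (eta * y)" using exp_ge_add_one_self[of "eta * y"] by linarith
      then have "eta * y * exp (- (eta * y)) \<le> 1" by (simp add: exp_minus field_simps)
      then show ?thesis using eta0 by (simp add: field_simps)
    qed
    finally show ?thesis unfolding y_def .
  qed
  have "rho t istar - RB N eta v m t = (\<Sum>i=1..N. ew i / Z * (rho t istar - rho t i))"
  proof -
    have e1: "(\<Sum>i=1..N. ew i / Z * (rho t istar - rho t i)) = (\<Sum>i=1..N. ew i / Z * rho t istar) - (\<Sum>i=1..N. ew i / Z * rho t i)"
      by (simp add: right_diff_distrib sum_subtractf)
    have e2: "(\<Sum>i=1..N. ew i / Z * rho t istar) = (\<Sum>i=1..N. ew i / Z) * rho t istar"
      by (simp add: sum_distrib_right)
    have e3: "(\<Sum>i=1..N. ew i / Z * rho t i) = (\<Sum>i=1..N. ew i * rho t i) / Z"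
      by (simp add: sum_divide_distrib)
    have "(\<Sum>i=1..N. ew i / Z * (rho t istar - rho t i)) = (\<Sum>i=1..N. ew i / Z) * rho t istar - (\<Sum>i=1..N. ew i * rho t i) / Z"
      using e1 e2 e3 by simp
    also have "(\<Sum>i=1..N. ew i / Z) = 1" using Zpos unfolding Z_def by (simp add: sum_divide_distrib[symmetric])
    finally show ?thesis unfolding RBeq by simp
  qed
  also have "\<dots> \<le> (\<Sum>i=1..N. 1 / eta)"
  proof (intro sum_mono)
    fix i assume i: "i \<in> {1..N}"
    have "ew i / Z * (rho t istar - rho t i) \<le> ew i / Z * (H istar - H i)"
      using diffH[OF i] ewpos[OF i] Zpos by (intro mult_left_mono) auto
    then show "ew i / Z * (rho t istar - rho t i) \<le> 1 / eta" using trm[OF i] by linarith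
  qed
  also have "\<dots> = real N / eta" by simp
  finally show ?thesis using rho_is by linarith
qed

lemma RB_nonneg:
  assumes "v t \<ge> 0"
  shows "RB N eta v m t \<ge> 0"
  unfolding RB_def bidB_def
  using assms by (simp, intro integral_nonneg_AE AE_I2) (auto simp: r_def)

lemma regB_total:
  fixes T N :: nat and eta :: real and v m :: "nat \<Rightarrow> real"
  assumes N1: "N \<ge> 1" and eta0: "eta > 0" and hv: "\<forall>t\<in>{1..T}. v t \<in> {0..1} \<and> m t \<in> {0..1}"
  shows "(\<Sum>t=1..T. max (v t - m t) 0 - RB N eta v m t) \<le> 1 + LT m T + real T * (1 / real N + real N / eta)"
proof -
  define P where "P = (\<lambda>t. m t \<noteq> m (t - 1))"
  have each: "max (v t - m t) 0 - RB N eta v m t \<le> of_bool (P t) + (1 / real N + real N / eta)" if t: "t \<in> {1..T}" for t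
  proof (cases "P t")
    case True
    have "RB N eta v m t \<ge> 0" using hv t by (intro RB_nonneg) auto
    moreover have "max (v t - m t) 0 \<le> 1"
    proof -
      have "v t \<le> 1" "m t \<ge> 0" using hv t by auto
      then show ?thesis by simp
    qed
    moreover have "1 / real N + real N / eta \<ge> 0" using eta0 by simp
    ultimately show ?thesis using True by simp
  next
    case False
    then show ?thesis using good_round[OF N1 eta0 hv t] unfolding P_def by simp
  qed
  have "(\<Sum>t=1..T. max (v t - m t) 0 - RB N eta v m t) \<le> (\<Sum>t=1..T. of_bool (P t) + (1 / real N + real N / eta))"
    using each by (intro sum_mono) auto
  also have "\<dots> = (\<Sum>t=1..T. (of_bool (P t) :: real)) + real T * (1 / real N + real N / eta)"
    by (simp add: sum.distrib)
  also have "(\<Sum>t=1..T. (of_bool (P t) :: real)) = real (card ({1..T} \<inter> {t. P t}))"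
    by (simp add: sum_of_bool_eq)
  also have "real (card ({1..T} \<inter> {t. P t})) \<le> 1 + LT m T"
  proof -
    have "card ({1..T} \<inter> {t. P t}) \<le> card ({1} \<union> {t\<in>{2..T}. P t})"
      by (intro card_mono) auto
    also have "\<dots> \<le> card {1::nat} + card {t\<in>{2..T}. P t}" by (rule card_Un_le)
    finally have "card ({1..T} \<inter> {t. P t}) \<le> 1 + card {t\<in>{2..T}. P t}" by simp
    then have "real (card ({1..T} \<inter> {t. P t})) \<le> real (1 + card {t\<in>{2..T}. P t})" by (rule of_nat_mono)
    then show ?thesis unfolding LT_def P_def by simp
  qed
  finally show ?thesis by simp
qed

lemma E_mono_fin:
  fixes f g :: "'a \<Rightarrow> real"
  assumes "finite (set_pmf M)" "\<And>x. x \<in> set_pmf M \<Longrightarrow> f x \<le> g x"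
  shows "measure_pmf.expectation M f \<le> measure_pmf.expectation M g"
  using assms by (intro integral_mono_AE) (auto simp: integrable_measure_pmf_finite AE_measure_pmf_iff)

lemma E_lin_fin:
  fixes f :: "'a \<Rightarrow> real"
  assumes "finite (set_pmf M)"
  shows "measure_pmf.expectation M (\<lambda>x. a * f x + b) = a * measure_pmf.expectation M f + b"
proof -
  have "measure_pmf.expectation M (\<lambda>x. a * f x + b) = measure_pmf.expectation M (\<lambda>x. a * f x) + measure_pmf.expectation M (\<lambda>x. b)"
    using assms by (intro Bochner_Integration.integral_add) (auto simp: integrable_measure_pmf_finite)
  then show ?thesis by simp
qed

lemma E_const_ge:
  fixes f :: "'a \<Rightarrow> real"
  assumes "finite (set_pmf M)" "\<And>x. x \<in> set_pmf M \<Longrightarrow> c \<le> f x"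
  shows "c \<le> measure_pmf.expectation M f"
proof -
  have "measure_pmf.expectation M (\<lambda>x. c) \<le> measure_pmf.expectation M f"
    using assms by (intro E_mono_fin) auto
  then show ?thesis by simp
qed

lemma E_cong_fin:
  fixes f g :: "'a \<Rightarrow> real"
  assumes "\<And>x. x \<in> set_pmf M \<Longrightarrow> f x = g x"
  shows "measure_pmf.expectation M f = measure_pmf.expectation M g"
  using assms by (intro integral_cong_AE) (auto simp: AE_measure_pmf_iff)

lemma bind_fin:
  assumes "finite (set_pmf M)" "\<And>x. x \<in> set_pmf M \<Longrightarrow> finite (set_pmf (N x))"
  shows "finite (set_pmf (bind_pmf M N))"
  using assms by simp

context
  fixes T NB :: nat and eta :: real and v m :: "nat \<Rightarrow> real"
  assumes T1: "T \<ge> 1" and NB1: "NB \<ge> 1" and hv: "\<forall>t\<in>{1..T}. v t \<in> {0..1} \<and> m t \<in> {0..1}"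
begin

lemma wA_pos:
  assumes t: "t \<in> {1..T}"
  shows "snd (snd (prodState T v m (t - 1))) i > 0"
proof -
  obtain t' where tt: "t = Suc t'" using t by (cases t) auto
  obtain s Vp w where st: "prodState T v m t' = (s, Vp, w)" by (cases "prodState T v m t'") auto
  have inv: "invA T v m t'" using invA_all[OF T1 hv] t tt by auto
  then have s1: "1 \<le> s" and wprod: "\<And>i. w i = (\<Prod>x\<in>{s..t'}. 1 + (1/2) * gA T v m x i)"
    unfolding invA_def st by auto
  have "w i > 0"
    unfolding wprod[of i]
  proof (intro prod_pos ballI)
    fix x assume x: "x \<in> {s..t'}"
    then have "x \<in> {1..T}" using s1 t tt by auto
    then have "-1 \<le> gA T v m x i" using gA_bounds[of v x m T i] hv by auto
    then show "0 < 1 + (1/2) * gA T v m x i" by linarith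
  qed
  then show ?thesis using st tt by simp
qed

lemma bidA_fin: "t \<in> {1..T} \<Longrightarrow> finite (set_pmf (bidA T v m t))"
  unfolding bidA_def using finite_wpmf[of T "snd (snd (prodState T v m (t - 1)))"] T1 wA_pos by auto

lemma bidB_fin: "finite (set_pmf (bidB NB eta v m t))"
  unfolding bidB_def using finite_wpmf NB1 by auto

lemma r_min_range: "t \<in> {1..T} \<Longrightarrow> x \<ge> 0 \<Longrightarrow> 0 \<le> r (min (v t) x) (v t) (m t) \<and> r (min (v t) x) (v t) (m t) \<le> 1"
proof -
  assume t: "t \<in> {1..T}" and x: "x \<ge> 0"
  have vm: "v t \<in> {0..1}" "m t \<in> {0..1}" using hv t by auto
  then have "max (v t - m t) 0 \<le> 1" by auto
  then show ?thesis using r_bid_bounds[OF vm x] by linarith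
qed

lemma rA_range: "t \<in> {1..T} \<Longrightarrow> b \<in> set_pmf (bidA T v m t) \<Longrightarrow> 0 \<le> r b (v t) (m t) \<and> r b (v t) (m t) \<le> 1"
  unfolding bidA_def using r_min_range by auto

lemma rB_range: "t \<in> {1..T} \<Longrightarrow> b \<in> set_pmf (bidB NB eta v m t) \<Longrightarrow> 0 \<le> r b (v t) (m t) \<and> r b (v t) (m t) \<le> 1"
  unfolding bidB_def using r_min_range by auto


definition pp :: "real \<Rightarrow> real" where "pp w = w / (w + (1 - etaC T))"

context
  assumes eC: "0 < etaC T" "etaC T \<le> 1/2"
begin

lemma wDist_fin_pos:
  "t \<le> T \<Longrightarrow> finite (set_pmf (wDist T NB eta v m t)) \<and> (\<forall>w\<in>set_pmf (wDist T NB eta v m t). w > 0)"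
proof (induction t)
  case 0 then show ?case using eC by simp
next
  case (Suc t)
  then have IH: "finite (set_pmf (wDist T NB eta v m t))" "\<forall>w\<in>set_pmf (wDist T NB eta v m t). w > 0" by auto
  have st: "Suc t \<in> {1..T}" using Suc.prems by auto
  have fin: "finite (set_pmf (wDist T NB eta v m (Suc t)))"
    using IH(1) bidA_fin[OF st] bidB_fin by simp
  have pos: "w' > 0" if w': "w' \<in> set_pmf (wDist T NB eta v m (Suc t))" for w'
  proof -
    from w' obtain w bA bB where w: "w \<in> set_pmf (wDist T NB eta v m t)" and bA: "bA \<in> set_pmf (bidA T v m (Suc t))"
      and bB: "bB \<in> set_pmf (bidB NB eta v m (Suc t))"
      and eq: "w' = w * (1 + etaC T * (r bA (v (Suc t)) (m (Suc t)) - r bB (v (Suc t)) (m (Suc t))))"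
      by auto
    have ra: "0 \<le> r bA (v (Suc t)) (m (Suc t))" "r bA (v (Suc t)) (m (Suc t)) \<le> 1" using rA_range[OF st bA] by auto
    have rb: "0 \<le> r bB (v (Suc t)) (m (Suc t))" "r bB (v (Suc t)) (m (Suc t)) \<le> 1" using rB_range[OF st bB] by auto
    have "etaC T * (r bA (v (Suc t)) (m (Suc t)) - r bB (v (Suc t)) (m (Suc t))) \<ge> etaC T * (-1)"
      using ra rb eC by (intro mult_left_mono) auto
    then have "1 + etaC T * (r bA (v (Suc t)) (m (Suc t)) - r bB (v (Suc t)) (m (Suc t))) > 0" using eC by linarith
    then show ?thesis unfolding eq using IH(2) w by simp
  qed
  show ?case using fin pos by auto
qed

lemma pp_range: "w > 0 \<Longrightarrow> 0 \<le> pp w \<and> pp w \<le> 1"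
  unfolding pp_def using eC by (auto simp: divide_le_eq)

lemma learner_E:
  assumes t: "t \<in> {1..T}"
  shows "measure_pmf.expectation (learnerBid T NB eta v m t) (\<lambda>b. r b (v t) (m t))
       = measure_pmf.expectation (wDist T NB eta v m (t - 1)) (\<lambda>w. pp w * RA T v m t + (1 - pp w) * RB NB eta v m t)"
proof -
  define f where "f = (\<lambda>b. r b (v t) (m t))"
  have W: "finite (set_pmf (wDist T NB eta v m (t - 1)))" "\<forall>w\<in>set_pmf (wDist T NB eta v m (t - 1)). w > 0"
    using wDist_fin_pos[of "t - 1"] t by auto
  have A: "finite (set_pmf (bidA T v m t))" using bidA_fin[OF t] .
  have B: "finite (set_pmf (bidB NB eta v m t))" using bidB_fin .
  have lb: "learnerBid T NB eta v m t = bind_pmf (wDist T NB eta v m (t - 1)) (\<lambda>w.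
     bind_pmf (bidA T v m t) (\<lambda>bA. bind_pmf (bidB NB eta v m t) (\<lambda>bB.
     map_pmf (\<lambda>c. if c then bA else bB) (bernoulli_pmf (pp w)))))"
    unfolding learnerBid_def pp_def by simp
  have inner: "measure_pmf.expectation (bind_pmf (bidA T v m t) (\<lambda>bA. bind_pmf (bidB NB eta v m t) (\<lambda>bB.
     map_pmf (\<lambda>c. if c then bA else bB) (bernoulli_pmf (pp w))))) f = pp w * RA T v m t + (1 - pp w) * RB NB eta v m t"
    if w: "w \<in> set_pmf (wDist T NB eta v m (t - 1))" for w
  proof -
    have p: "0 \<le> pp w" "pp w \<le> 1" using pp_range W(2) w by auto
    have "measure_pmf.expectation (bind_pmf (bidA T v m t) (\<lambda>bA. bind_pmf (bidB NB eta v m t) (\<lambda>bB.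
     map_pmf (\<lambda>c. if c then bA else bB) (bernoulli_pmf (pp w))))) f
      = measure_pmf.expectation (bidA T v m t) (\<lambda>bA. measure_pmf.expectation (bidB NB eta v m t) (\<lambda>bB.
          measure_pmf.expectation (map_pmf (\<lambda>c. if c then bA else bB) (bernoulli_pmf (pp w))) f))"
      apply (subst integral_bind_pmf_fin)
       apply (intro bind_fin A B)
       apply (simp add: finite)
      apply (intro E_cong_fin)
      apply (subst integral_bind_pmf_fin)
       apply (intro bind_fin B)
       apply (simp add: finite)
      apply simp
      done
    also have "\<dots> = measure_pmf.expectation (bidA T v m t) (\<lambda>bA. measure_pmf.expectation (bidB NB eta v m t) (\<lambda>bB.
          (1 - pp w) * f bB + pp w * f bA))"
      using p by (simp add: algebra_simps)
    also have "\<dots> = measure_pmf.expectation (bidA T v m t) (\<lambda>bA. pp w * f bA + (1 - pp w) * RB NB eta v m t)"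
    proof (intro Bochner_Integration.integral_cong refl)
      fix bA
      have "measure_pmf.expectation (bidB NB eta v m t) (\<lambda>bB. (1 - pp w) * f bB + pp w * f bA)
          = (1 - pp w) * measure_pmf.expectation (bidB NB eta v m t) f + pp w * f bA" by (rule E_lin_fin[OF B])
      then show "measure_pmf.expectation (bidB NB eta v m t) (\<lambda>bB. (1 - pp w) * f bB + pp w * f bA)
          = pp w * f bA + (1 - pp w) * RB NB eta v m t" unfolding RB_def f_def by simp
    qed
    also have "\<dots> = pp w * RA T v m t + (1 - pp w) * RB NB eta v m t"
      using A by (simp add: E_lin_fin RA_def f_def)
    finally show ?thesis .
  qed
  show ?thesis
    unfolding lb f_def[symmetric]
    apply (subst integral_bind_pmf_fin)
     apply (intro bind_fin W(1) A B)
     apply (simp add: finite)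
    apply (intro E_cong_fin inner)
    apply simp
    done
qed

lemma E_wDist_Suc:
  fixes h :: "real \<Rightarrow> real"
  assumes u: "Suc t \<in> {1..T}"
  shows "measure_pmf.expectation (wDist T NB eta v m (Suc t)) h =
    measure_pmf.expectation (wDist T NB eta v m t) (\<lambda>w. measure_pmf.expectation (bidA T v m (Suc t)) (\<lambda>bA.
      measure_pmf.expectation (bidB NB eta v m (Suc t)) (\<lambda>bB.
        h (w * (1 + etaC T * (r bA (v (Suc t)) (m (Suc t)) - r bB (v (Suc t)) (m (Suc t))))))))"
proof -
  have W: "finite (set_pmf (wDist T NB eta v m t))" using wDist_fin_pos[of t] u by auto
  have A: "finite (set_pmf (bidA T v m (Suc t)))" using bidA_fin[OF u] .
  have B: "finite (set_pmf (bidB NB eta v m (Suc t)))" using bidB_fin .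
  show ?thesis
    apply (simp only: wDist.simps)
    apply (subst integral_bind_pmf_fin)
     apply (intro bind_fin W A B)
     apply (simp add: B)
    apply (intro E_cong_fin)
    apply (subst integral_bind_pmf_fin)
     apply (intro bind_fin A B)
     apply (simp add: B)
    apply simp
    done
qed

lemma E_AB_bound:
  assumes u: "u \<in> {1..T}"
    and le: "\<And>bA bB. bA \<in> set_pmf (bidA T v m u) \<Longrightarrow> bB \<in> set_pmf (bidB NB eta v m u) \<Longrightarrow>
          h bA bB \<le> c + k * (r bA (v u) (m u) - r bB (v u) (m u))"
  shows "measure_pmf.expectation (bidA T v m u) (\<lambda>bA. measure_pmf.expectation (bidB NB eta v m u) (\<lambda>bB. h bA bB))
     \<le> c + k * (RA T v m u - RB NB eta v m u)"
proof -
  have A: "finite (set_pmf (bidA T v m u))" using bidA_fin[OF u] .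
  have B: "finite (set_pmf (bidB NB eta v m u))" using bidB_fin .
  have "measure_pmf.expectation (bidA T v m u) (\<lambda>bA. measure_pmf.expectation (bidB NB eta v m u) (\<lambda>bB. h bA bB))
     \<le> measure_pmf.expectation (bidA T v m u) (\<lambda>bA. measure_pmf.expectation (bidB NB eta v m u) (\<lambda>bB.
          (- k) * r bB (v u) (m u) + (c + k * r bA (v u) (m u))))"
    using A B le by (intro E_mono_fin) (auto simp: algebra_simps)
  also have "\<dots> = measure_pmf.expectation (bidA T v m u) (\<lambda>bA. k * r bA (v u) (m u) + (c - k * RB NB eta v m u))"
  proof (intro Bochner_Integration.integral_cong refl)
    fix bA
    show "measure_pmf.expectation (bidB NB eta v m u) (\<lambda>bB. (- k) * r bB (v u) (m u) + (c + k * r bA (v u) (m u)))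
        = k * r bA (v u) (m u) + (c - k * RB NB eta v m u)"
      using E_lin_fin[OF B, of "- k" "\<lambda>bB. r bB (v u) (m u)" "c + k * r bA (v u) (m u)"] unfolding RB_def by simp
  qed
  also have "\<dots> = k * RA T v m u + (c - k * RB NB eta v m u)"
    using A by (simp add: E_lin_fin RA_def)
  finally show ?thesis by (simp add: algebra_simps)
qed

lemma E_AB_bound_ge:
  assumes u: "u \<in> {1..T}"
    and le: "\<And>bA bB. bA \<in> set_pmf (bidA T v m u) \<Longrightarrow> bB \<in> set_pmf (bidB NB eta v m u) \<Longrightarrow>
          c + k * (r bA (v u) (m u) - r bB (v u) (m u)) \<le> h bA bB"
  shows "c + k * (RA T v m u - RB NB eta v m u) \<le>
     measure_pmf.expectation (bidA T v m u) (\<lambda>bA. measure_pmf.expectation (bidB NB eta v m u) (\<lambda>bB. h bA bB))"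
proof -
  have A: "finite (set_pmf (bidA T v m u))" using bidA_fin[OF u] .
  have B: "finite (set_pmf (bidB NB eta v m u))" using bidB_fin .
  have "measure_pmf.expectation (bidA T v m u) (\<lambda>bA. measure_pmf.expectation (bidB NB eta v m u) (\<lambda>bB.
          (- k) * r bB (v u) (m u) + (c + k * r bA (v u) (m u))))
     \<le> measure_pmf.expectation (bidA T v m u) (\<lambda>bA. measure_pmf.expectation (bidB NB eta v m u) (\<lambda>bB. h bA bB))"
    using A B le by (intro E_mono_fin) (auto simp: algebra_simps)
  moreover have "measure_pmf.expectation (bidA T v m u) (\<lambda>bA. measure_pmf.expectation (bidB NB eta v m u) (\<lambda>bB.
          (- k) * r bB (v u) (m u) + (c + k * r bA (v u) (m u))))
      = measure_pmf.expectation (bidA T v m u) (\<lambda>bA. k * r bA (v u) (m u) + (c - k * RB NB eta v m u))"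
  proof (intro Bochner_Integration.integral_cong refl)
    fix bA
    show "measure_pmf.expectation (bidB NB eta v m u) (\<lambda>bB. (- k) * r bB (v u) (m u) + (c + k * r bA (v u) (m u)))
        = k * r bA (v u) (m u) + (c - k * RB NB eta v m u)"
      using E_lin_fin[OF B, of "- k" "\<lambda>bB. r bB (v u) (m u)" "c + k * r bA (v u) (m u)"] unfolding RB_def by simp
  qed
  moreover have "\<dots> = k * RA T v m u + (c - k * RB NB eta v m u)"
    using A by (simp add: E_lin_fin RA_def)
  ultimately show ?thesis by (simp add: algebra_simps)
qed

lemma Phi_step:
  assumes tT: "Suc t \<le> T"
  shows "measure_pmf.expectation (wDist T NB eta v m (Suc t)) (\<lambda>w. ln (w + (1 - etaC T)))
    \<le> measure_pmf.expectation (wDist T NB eta v m t) (\<lambda>w. ln (w + (1 - etaC T)))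
      + etaC T * (RA T v m (Suc t) - RB NB eta v m (Suc t)) * measure_pmf.expectation (wDist T NB eta v m t) pp"
proof -
  define e where "e = etaC T"
  have e: "0 < e" "e \<le> 1/2" using eC unfolding e_def by auto
  have u: "Suc t \<in> {1..T}" using tT by auto
  have W: "finite (set_pmf (wDist T NB eta v m t))" "\<forall>w\<in>set_pmf (wDist T NB eta v m t). w > 0"
    using wDist_fin_pos[of t] tT by auto
  define D where "D = RA T v m (Suc t) - RB NB eta v m (Suc t)"
  have pw: "ln (w * (1 + e * (ra - rb)) + (1 - e)) \<le> ln (w + (1 - e)) + e * pp w * (ra - rb)"
    if w: "w > 0" and ra: "0 \<le> ra" "ra \<le> 1" and rb: "0 \<le> rb" "rb \<le> 1" for w ra rb
  proof -
    define Wt where "Wt = w + (1 - e)"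
    have Wt: "Wt > 0" unfolding Wt_def using w e by simp
    have q: "0 \<le> pp w" "pp w \<le> 1" using pp_range w by auto
    have ppe: "pp w = w / Wt" unfolding pp_def Wt_def e_def by simp
    have eq: "w * (1 + e * (ra - rb)) + (1 - e) = Wt * (1 + e * pp w * (ra - rb))"
      unfolding ppe using Wt by (simp add: field_simps Wt_def)
    have "\<bar>e * pp w * (ra - rb)\<bar> \<le> 1/2"
    proof -
      have "\<bar>e * pp w * (ra - rb)\<bar> = e * pp w * \<bar>ra - rb\<bar>" using e q by (simp add: abs_mult)
      also have "\<dots> \<le> e * 1 * 1" using e q ra rb by (intro mult_mono) auto
      finally show ?thesis using e by simp
    qed
    then have pos: "1 + e * pp w * (ra - rb) > 0" by linarith
    have "ln (Wt * (1 + e * pp w * (ra - rb))) = ln Wt + ln (1 + e * pp w * (ra - rb))"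
      using Wt pos by (simp add: ln_mult)
    also have "ln (1 + e * pp w * (ra - rb)) \<le> e * pp w * (ra - rb)"
      using ln_le_minus_one[OF pos] by simp
    finally show ?thesis unfolding eq Wt_def by simp
  qed
  have "measure_pmf.expectation (wDist T NB eta v m (Suc t)) (\<lambda>w. ln (w + (1 - etaC T)))
    \<le> measure_pmf.expectation (wDist T NB eta v m t) (\<lambda>w. ln (w + (1 - e)) + e * pp w * D)"
    unfolding E_wDist_Suc[OF u] e_def[symmetric]
  proof (intro E_mono_fin W(1))
    fix w assume w: "w \<in> set_pmf (wDist T NB eta v m t)"
    show "measure_pmf.expectation (bidA T v m (Suc t)) (\<lambda>bA. measure_pmf.expectation (bidB NB eta v m (Suc t))
       (\<lambda>bB. ln (w * (1 + e * (r bA (v (Suc t)) (m (Suc t)) - r bB (v (Suc t)) (m (Suc t)))) + (1 - e))))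
      \<le> ln (w + (1 - e)) + e * pp w * D"
      unfolding D_def
      apply (rule E_AB_bound[OF u])
      using pw W(2) w rA_range[OF u] rB_range[OF u] by auto
  qed
  also have "\<dots> = measure_pmf.expectation (wDist T NB eta v m t) (\<lambda>w. ln (w + (1 - e)))
      + measure_pmf.expectation (wDist T NB eta v m t) (\<lambda>w. (e * D) * pp w)"
    using W(1) by (subst Bochner_Integration.integral_add[symmetric]) (auto simp: integrable_measure_pmf_finite algebra_simps)
  also have "measure_pmf.expectation (wDist T NB eta v m t) (\<lambda>w. (e * D) * pp w) = e * D * measure_pmf.expectation (wDist T NB eta v m t) pp"
    by simp
  finally show ?thesis unfolding e_def D_def by simp
qed

lemma Psi_step:
  assumes tT: "Suc t \<le> T"
  shows "measure_pmf.expectation (wDist T NB eta v m t) (\<lambda>w. ln w)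
      + etaC T * (RA T v m (Suc t) - RB NB eta v m (Suc t)) - 2 * (etaC T)^2
    \<le> measure_pmf.expectation (wDist T NB eta v m (Suc t)) (\<lambda>w. ln w)"
proof -
  define e where "e = etaC T"
  have e: "0 < e" "e \<le> 1/2" using eC unfolding e_def by auto
  have u: "Suc t \<in> {1..T}" using tT by auto
  have W: "finite (set_pmf (wDist T NB eta v m t))" "\<forall>w\<in>set_pmf (wDist T NB eta v m t). w > 0"
    using wDist_fin_pos[of t] tT by auto
  define D where "D = RA T v m (Suc t) - RB NB eta v m (Suc t)"
  have pw: "ln w - 2 * e^2 + e * (ra - rb) \<le> ln (w * (1 + e * (ra - rb)))"
    if w: "w > 0" and ra: "0 \<le> ra" "ra \<le> 1" and rb: "0 \<le> rb" "rb \<le> 1" for w ra rb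
  proof -
    have ab: "\<bar>e * (ra - rb)\<bar> \<le> 1/2"
    proof -
      have "\<bar>e * (ra - rb)\<bar> = e * \<bar>ra - rb\<bar>" using e by (simp add: abs_mult)
      also have "\<dots> \<le> e * 1" using e ra rb by (intro mult_left_mono) auto
      finally show ?thesis using e by simp
    qed
    then have pos: "1 + e * (ra - rb) > 0" by linarith
    have b: "\<bar>ln (1 + e * (ra - rb)) - e * (ra - rb)\<bar> \<le> 2 * (e * (ra - rb))^2"
      using ab by (rule abs_ln_one_plus_x_minus_x_bound)
    have "(e * (ra - rb))^2 \<le> e^2"
    proof -
      have "(e * (ra - rb))^2 = e^2 * (ra - rb)^2" by (simp add: power_mult_distrib)
      also have "(ra - rb)^2 \<le> 1"
      proof -
        have "\<bar>ra - rb\<bar> \<le> 1" using ra rb by auto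
        then have "\<bar>ra - rb\<bar>^2 \<le> 1^2" by (intro power_mono) auto
        then show ?thesis by simp
      qed
      then have "e^2 * (ra - rb)^2 \<le> e^2 * 1" by (intro mult_left_mono) auto
      finally show ?thesis by simp
    qed
    then have "ln w - 2 * e^2 + e * (ra - rb) \<le> ln w + ln (1 + e * (ra - rb))" using b by linarith
    also have "\<dots> = ln (w * (1 + e * (ra - rb)))" using w pos by (simp add: ln_mult)
    finally show ?thesis .
  qed
  have "measure_pmf.expectation (wDist T NB eta v m t) (\<lambda>w. (ln w - 2 * e^2) + e * D)
    \<le> measure_pmf.expectation (wDist T NB eta v m (Suc t)) (\<lambda>w. ln w)"
    unfolding E_wDist_Suc[OF u] e_def[symmetric]
  proof (intro E_mono_fin W(1))
    fix w assume w: "w \<in> set_pmf (wDist T NB eta v m t)"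
    show "ln w - 2 * e^2 + e * D \<le> measure_pmf.expectation (bidA T v m (Suc t)) (\<lambda>bA. measure_pmf.expectation (bidB NB eta v m (Suc t))
       (\<lambda>bB. ln (w * (1 + e * (r bA (v (Suc t)) (m (Suc t)) - r bB (v (Suc t)) (m (Suc t)))))))"
      unfolding D_def
      apply (rule E_AB_bound_ge[OF u])
      using pw W(2) w rA_range[OF u] rB_range[OF u] by auto
  qed
  moreover have "measure_pmf.expectation (wDist T NB eta v m t) (\<lambda>w. (ln w - 2 * e^2) + e * D)
      = measure_pmf.expectation (wDist T NB eta v m t) (\<lambda>w. ln w) - 2 * e^2 + e * D"
    using W(1) by (subst Bochner_Integration.integral_add) (auto simp: integrable_measure_pmf_finite)
  ultimately show ?thesis unfolding e_def D_def by simp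
qed

lemma Phi_tele:
  "n \<le> T \<Longrightarrow> measure_pmf.expectation (wDist T NB eta v m n) (\<lambda>w. ln (w + (1 - etaC T)))
    \<le> (\<Sum>t=1..n. etaC T * (RA T v m t - RB NB eta v m t) * measure_pmf.expectation (wDist T NB eta v m (t - 1)) pp)"
proof (induction n)
  case 0 then show ?case by simp
next
  case (Suc n)
  then show ?case using Phi_step[OF Suc.prems] by (simp add: sum.cl_ivl_Suc)
qed

lemma Psi_tele:
  "n \<le> T \<Longrightarrow> ln (etaC T) + (\<Sum>t=1..n. etaC T * (RA T v m t - RB NB eta v m t) - 2 * (etaC T)^2)
    \<le> measure_pmf.expectation (wDist T NB eta v m n) (\<lambda>w. ln w)"
proof (induction n)
  case 0 then show ?case by simp
next
  case (Suc n)
  then show ?case using Psi_step[OF Suc.prems] by (simp add: sum.cl_ivl_Suc)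
qed

lemma combine:
  shows "expDR T NB eta v m \<le> (\<Sum>t=1..T. max (v t - m t) 0 - RB NB eta v m t) + 2"
    and "expDR T NB eta v m \<le> (\<Sum>t=1..T. regA T v m t) + 2 * etaC T * real T - ln (etaC T) / etaC T"
proof -
  define e where "e = etaC T"
  have e: "0 < e" "e \<le> 1/2" using eC unfolding e_def by auto
  define Pt where "Pt = (\<lambda>t. measure_pmf.expectation (wDist T NB eta v m (t - 1)) pp)"
  define D where "D = (\<lambda>t. RA T v m t - RB NB eta v m t)"
  have ER: "measure_pmf.expectation (learnerBid T NB eta v m t) (\<lambda>b. r b (v t) (m t)) = RB NB eta v m t + D t * Pt t"
    if t: "t \<in> {1..T}" for t
  proof -
    have W: "finite (set_pmf (wDist T NB eta v m (t - 1)))" using wDist_fin_pos[of "t - 1"] t by auto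
    have "measure_pmf.expectation (wDist T NB eta v m (t - 1)) (\<lambda>w. pp w * RA T v m t + (1 - pp w) * RB NB eta v m t)
      = measure_pmf.expectation (wDist T NB eta v m (t - 1)) (\<lambda>w. D t * pp w + RB NB eta v m t)"
      unfolding D_def by (simp add: algebra_simps)
    also have "\<dots> = D t * Pt t + RB NB eta v m t" unfolding Pt_def using W by (rule E_lin_fin)
    finally show ?thesis using learner_E[OF t] by simp
  qed
  have expDR_eq: "expDR T NB eta v m = (\<Sum>t=1..T. max (v t - m t) 0 - RB NB eta v m t) - (\<Sum>t=1..T. D t * Pt t)"
  proof -
    have "(\<Sum>t=1..T. measure_pmf.expectation (learnerBid T NB eta v m t) (\<lambda>b. r b (v t) (m t)))
        = (\<Sum>t=1..T. RB NB eta v m t + D t * Pt t)" using ER by (intro sum.cong) auto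
    then show ?thesis unfolding expDR_def by (simp add: sum.distrib sum_subtractf)
  qed
  have WT: "finite (set_pmf (wDist T NB eta v m T))" "\<forall>w\<in>set_pmf (wDist T NB eta v m T). w > 0"
    using wDist_fin_pos[of T] by auto
  have PhiT: "measure_pmf.expectation (wDist T NB eta v m T) (\<lambda>w. ln (w + (1 - e))) \<le> e * (\<Sum>t=1..T. D t * Pt t)"
    using Phi_tele[of T] unfolding e_def[symmetric] D_def Pt_def by (simp add: sum_distrib_left algebra_simps)
  have PhiL1: "ln (1 - e) \<le> measure_pmf.expectation (wDist T NB eta v m T) (\<lambda>w. ln (w + (1 - e)))"
    using WT e by (intro E_const_ge) auto
  have ln1e: "-2 * e \<le> ln (1 - e)"
  proof -
    have "\<bar>ln (1 + (- e)) - (- e)\<bar> \<le> 2 * (- e)^2" using e by (intro abs_ln_one_plus_x_minus_x_bound) auto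
    moreover have "2 * e^2 \<le> e" using e by (simp add: power2_eq_square)
    ultimately show ?thesis by simp
  qed
  have S1: "-2 \<le> (\<Sum>t=1..T. D t * Pt t)"
  proof -
    have "e * (-2) \<le> e * (\<Sum>t=1..T. D t * Pt t)" using PhiT PhiL1 ln1e by simp
    then show ?thesis using e(1) by (rule mult_left_le_imp_le)
  qed
  show "expDR T NB eta v m \<le> (\<Sum>t=1..T. max (v t - m t) 0 - RB NB eta v m t) + 2"
    unfolding expDR_eq using S1 by simp
  have PhiPsi: "measure_pmf.expectation (wDist T NB eta v m T) (\<lambda>w. ln w) \<le> measure_pmf.expectation (wDist T NB eta v m T) (\<lambda>w. ln (w + (1 - e)))"
    using WT e by (intro E_mono_fin) auto
  have PsiT: "ln e + e * (\<Sum>t=1..T. D t) - 2 * e^2 * real T \<le> measure_pmf.expectation (wDist T NB eta v m T) (\<lambda>w. ln w)"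
  proof -
    have "(\<Sum>t=1..T. e * D t - 2 * e^2) = e * (\<Sum>t=1..T. D t) - 2 * e^2 * real T"
      by (simp add: sum_subtractf sum_distrib_left)
    then show ?thesis using Psi_tele[of T] unfolding e_def[symmetric] D_def by simp
  qed
  have S2: "ln e / e + (\<Sum>t=1..T. D t) - 2 * e * real T \<le> (\<Sum>t=1..T. D t * Pt t)"
  proof -
    have "ln e + e * (\<Sum>t=1..T. D t) - 2 * e^2 * real T \<le> e * (\<Sum>t=1..T. D t * Pt t)"
      using PsiT PhiPsi PhiT by linarith
    then have "(ln e + e * (\<Sum>t=1..T. D t) - 2 * e^2 * real T) / e \<le> (\<Sum>t=1..T. D t * Pt t)"
      using e by (simp add: divide_le_eq mult.commute)
    moreover have "(ln e + e * (\<Sum>t=1..T. D t) - 2 * e^2 * real T) / e = ln e / e + (\<Sum>t=1..T. D t) - 2 * e * real T"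
      using e by (simp add: field_simps power2_eq_square)
    ultimately show ?thesis by simp
  qed
  have "(\<Sum>t=1..T. max (v t - m t) 0 - RB NB eta v m t) = (\<Sum>t=1..T. regA T v m t) + (\<Sum>t=1..T. D t)"
    unfolding regA_def D_def by (simp add: sum.distrib[symmetric] sum_subtractf[symmetric] algebra_simps)
  then show "expDR T NB eta v m \<le> (\<Sum>t=1..T. regA T v m t) + 2 * etaC T * real T - ln (etaC T) / etaC T"
    unfolding expDR_eq e_def[symmetric] using S2 by linarith
qed

end

end

lemma lnT_ge1: "T \<ge> 3 \<Longrightarrow> ln (real T) \<ge> 1"
proof -
  assume T: "T \<ge> 3"
  have "exp 1 \<le> real T" using exp_le T by linarith
  then show ?thesis using T by (subst ln_ge_iff) auto
qed

lemma eta_facts: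
  assumes T4: "T \<ge> 4"
  shows "0 < etaC T" "etaC T \<le> 1/2"
    "2 * etaC T * real T \<le> ln (real T) * sqrt (real T)"
    "- ln (etaC T) / etaC T \<le> 2 * ln (real T) * sqrt (real T)"
proof -
  define lT where "lT = ln (real T)"
  have lT1: "lT \<ge> 1" unfolding lT_def using lnT_ge1 T4 by auto
  have Tp: "real T > 0" using T4 by simp
  have lTT: "lT \<le> real T" unfolding lT_def using ln_le_minus_one[OF Tp] by linarith
  have e_def': "etaC T = (1/2) * sqrt (lT / real T)" unfolding etaC_def lT_def by simp
  show e0: "0 < etaC T" unfolding e_def' using lT1 Tp by simp
  have "sqrt (lT / real T) \<le> 1" using lTT Tp lT1 by (simp add: divide_le_eq)
  then show "etaC T \<le> 1/2" unfolding e_def' by simp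
  have sq: "sqrt (lT / real T) = sqrt lT / sqrt (real T)" by (simp add: real_sqrt_divide)
  have sT: "sqrt (real T) > 0" using Tp by simp
  have "2 * etaC T * real T = sqrt lT * sqrt (real T)"
  proof -
    have "2 * etaC T * real T = sqrt lT / sqrt (real T) * (sqrt (real T) * sqrt (real T))"
      unfolding e_def' sq using Tp by simp
    also have "\<dots> = sqrt lT * sqrt (real T)" using sT by (simp add: field_simps)
    finally show ?thesis .
  qed
  also have "sqrt lT \<le> lT"
  proof -
    have s1: "sqrt lT \<ge> 1" using lT1 by simp
    have "sqrt lT * 1 \<le> sqrt lT * sqrt lT" using s1 by (intro mult_left_mono) auto
    then show ?thesis using lT1 by simp
  qed
  then have "sqrt lT * sqrt (real T) \<le> lT * sqrt (real T)" using sT by (intro mult_right_mono) auto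
  finally show "2 * etaC T * real T \<le> ln (real T) * sqrt (real T)" unfolding lT_def .
  have inv: "1 / etaC T = 2 * sqrt (real T) / sqrt lT" unfolding e_def' sq using sT lT1 by (simp add: field_simps)
  have inv2: "1 / etaC T \<le> 2 * sqrt (real T)"
  proof -
    have "sqrt lT \<ge> 1" using lT1 by simp
    moreover have "2 * sqrt (real T) * 1 \<le> 2 * sqrt (real T) * sqrt lT" using \<open>sqrt lT \<ge> 1\<close> sT by (intro mult_left_mono) auto
    ultimately have "2 * sqrt (real T) / sqrt lT \<le> 2 * sqrt (real T)" by (simp add: divide_le_eq)
    then show ?thesis using inv by simp
  qed
  have mln: "- ln (etaC T) \<le> lT"
  proof -
    have "- ln (etaC T) = ln (1 / etaC T)" using e0 by (simp add: ln_div)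
    also have "\<dots> \<le> ln (2 * sqrt (real T))" using inv2 e0 Tp by (subst ln_le_cancel_iff) auto
    also have "\<dots> = ln 2 + lT / 2" using sT Tp unfolding lT_def by (simp add: ln_mult ln_sqrt)
    also have "ln 2 \<le> lT / 2"
    proof -
      have "ln 4 \<le> lT" unfolding lT_def using T4 by (subst ln_le_cancel_iff) auto
      moreover have "ln (4::real) = 2 * ln 2" using ln_realpow[of 2 2] by simp
      ultimately show ?thesis by simp
    qed
    finally show ?thesis by simp
  qed
  have mln0: "- ln (etaC T) \<ge> 0" using e0 \<open>etaC T \<le> 1/2\<close> by simp
  have "- ln (etaC T) / etaC T = (- ln (etaC T)) * (1 / etaC T)" by simp
  also have "\<dots> \<le> lT * (2 * sqrt (real T))" using mln mln0 inv2 lT1 e0 by (intro mult_mono) auto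
  finally show "- ln (etaC T) / etaC T \<le> 2 * ln (real T) * sqrt (real T)" unfolding lT_def by simp
qed

lemma VT_le_LT:
  assumes hv: "\<forall>t\<in>{1..T}. v t \<in> {0..1} \<and> m t \<in> {0..1}"
  shows "VT m T \<le> LT m T"
proof -
  have "VT m T \<le> (\<Sum>t=2..T. (of_bool (m t \<noteq> m (t - 1)) :: real))"
    unfolding VT_def
  proof (intro sum_mono)
    fix t assume t: "t \<in> {2..T}"
    have t1: "t - 1 \<in> {1..T}" using t by auto
    have "m t \<in> {0..1}" using hv t by auto
    moreover have "m (t - 1) \<in> {0..1}" using hv t1 by blast
    ultimately show "\<bar>m t - m (t - 1)\<bar> \<le> of_bool (m t \<noteq> m (t - 1))" by auto
  qed
  also have "\<dots> = real (card ({2..T} \<inter> {t. m t \<noteq> m (t - 1)}))" by (simp add: sum_of_bool_eq)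
  also have "{2..T} \<inter> {t. m t \<noteq> m (t - 1)} = {t\<in>{2..T}. m t \<noteq> m (t - 1)}" by auto
  finally show ?thesis unfolding LT_def .
qed

lemma main_bound:
  fixes T :: nat and c :: real and v m :: "nat \<Rightarrow> real"
  assumes T4: "T \<ge> 4" and cl: "c * ln (real T) \<ge> 1"
    and hv: "\<forall>t\<in>{1..T}. v t \<in> {0..1} \<and> m t \<in> {0..1}" and VS: "VT m T \<ge> c * ln (real T)"
  shows "expDR T (T + 1) ((real T + 1) ^ 3) v m \<le> 50 * ln (real T) ^ 1 * min (sqrt (real T * VT m T)) (LT m T)"
proof -
  define S where "S = VT m T"
  define L where "L = LT m T"
  define lT where "lT = ln (real T)"
  have T1: "T \<ge> 1" using T4 by simp
  have NB1: "T + 1 \<ge> 1" by simp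
  have etap: "(real T + 1) ^ 3 > 0" by simp
  have Tp: "real T > 0" using T4 by simp
  have lT1: "lT \<ge> 1" unfolding lT_def using lnT_ge1 T4 by auto
  have S1: "S \<ge> 1" using VS cl unfolding S_def by linarith
  have SL: "S \<le> L" unfolding S_def L_def using VT_le_LT[OF hv] .
  have ef: "0 < etaC T" "etaC T \<le> 1/2" "2 * etaC T * real T \<le> lT * sqrt (real T)"
    "- ln (etaC T) / etaC T \<le> 2 * lT * sqrt (real T)" using eta_facts[OF T4] unfolding lT_def by auto
  define Q where "Q = sqrt (real T * S)"
  have sTS: "sqrt (real T) * sqrt S = Q" unfolding Q_def by (simp add: real_sqrt_mult)
  have sT1: "sqrt (real T) \<ge> 1" using T4 by simp
  have sS1: "sqrt S \<ge> 1" using S1 by simp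
  have Q1: "Q \<ge> 1"
  proof -
    have "1 * 1 \<le> sqrt (real T) * sqrt S" by (intro mult_mono) (use sT1 sS1 in auto)
    then show ?thesis using sTS by simp
  qed
  have sTQ: "sqrt (real T) \<le> Q"
  proof -
    have "sqrt (real T) * 1 \<le> sqrt (real T) * sqrt S" by (intro mult_left_mono) (use sS1 in auto)
    then show ?thesis using sTS by simp
  qed
  have A: "expDR T (T + 1) ((real T + 1) ^ 3) v m \<le> 50 * lT * Q"
  proof -
    have c2: "expDR T (T + 1) ((real T + 1) ^ 3) v m \<le> (\<Sum>t=1..T. regA T v m t) + 2 * etaC T * real T - ln (etaC T) / etaC T"
      using combine(2)[OF T1 NB1 hv ef(1) ef(2)] .
    have rA: "(\<Sum>t=1..T. regA T v m t) \<le> (2 * lT + 18) * sqrt (real T) * sqrt (S + 1 / real T) + 2 * lT + 4"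
      using regA_total[OF T1 hv] unfolding S_def lT_def .
    have sS: "sqrt (S + 1 / real T) \<le> 2 * sqrt S"
    proof -
      have "1 / real T \<le> 1" using T1 by simp
      then have "S + 1 / real T \<le> 4 * S" using S1 by linarith
      then have "sqrt (S + 1 / real T) \<le> sqrt (4 * S)" by simp
      also have "sqrt (4 * S) = 2 * sqrt S" by (simp add: real_sqrt_mult)
      finally show ?thesis .
    qed
    have k0: "2 * lT + 18 \<ge> 0" using lT1 by simp
    have "(2 * lT + 18) * sqrt (real T) * sqrt (S + 1 / real T) \<le> (2 * lT + 18) * sqrt (real T) * (2 * sqrt S)"
      using sS k0 by (intro mult_left_mono) auto
    also have "\<dots> = (4 * lT + 36) * (sqrt (real T) * sqrt S)" by (simp add: algebra_simps)
    also have "\<dots> = (4 * lT + 36) * Q" using sTS by simp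
    also have "\<dots> \<le> (40 * lT) * Q" using lT1 Q1 by (intro mult_right_mono) auto
    finally have t1: "(2 * lT + 18) * sqrt (real T) * sqrt (S + 1 / real T) \<le> 40 * lT * Q" .
    have t2: "2 * lT + 4 \<le> 6 * lT * Q"
    proof -
      have "6 * lT * 1 \<le> 6 * lT * Q" using Q1 lT1 by (intro mult_left_mono) auto
      then show ?thesis using lT1 by linarith
    qed
    have t3: "lT * sqrt (real T) \<le> lT * Q" using sTQ lT1 by (intro mult_left_mono) auto
    have a1: "40 * lT * Q = 40 * (lT * Q)" "6 * lT * Q = 6 * (lT * Q)" "50 * lT * Q = 50 * (lT * Q)"
      "2 * lT * sqrt (real T) = 2 * (lT * sqrt (real T))" by simp_all
    have a2: "lT * Q \<ge> 0" using lT1 Q1 by simp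
    show ?thesis using c2 rA t1 t2 t3 ef(3) ef(4) a1 a2 by linarith
  qed
  have B: "expDR T (T + 1) ((real T + 1) ^ 3) v m \<le> 50 * lT * L"
  proof -
    have c1: "expDR T (T + 1) ((real T + 1) ^ 3) v m \<le> (\<Sum>t=1..T. max (v t - m t) 0 - RB (T + 1) ((real T + 1) ^ 3) v m t) + 2"
      using combine(1)[OF T1 NB1 hv ef(1) ef(2)] .
    have rB: "(\<Sum>t=1..T. max (v t - m t) 0 - RB (T + 1) ((real T + 1) ^ 3) v m t)
        \<le> 1 + L + real T * (1 / real (T + 1) + real (T + 1) / (real T + 1) ^ 3)"
      using regB_total[OF NB1 etap hv] unfolding L_def .
    have small: "real T * (1 / real (T + 1) + real (T + 1) / (real T + 1) ^ 3) \<le> 2"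
    proof -
      define y where "y = real T + 1"
      have ry: "real (T + 1) = y" unfolding y_def by simp
      have y1: "y \<ge> 1" unfolding y_def by simp
      have "y / y ^ 3 = 1 / y ^ 2" using y1 by (simp add: power3_eq_cube power2_eq_square)
      also have "\<dots> \<le> 1 / y" using y1 by (simp add: divide_le_eq power2_eq_square)
      finally have "1 / y + y / y ^ 3 \<le> 2 / y" by simp
      then have "real T * (1 / y + y / y ^ 3) \<le> real T * (2 / y)" by (intro mult_left_mono) auto
      also have "\<dots> \<le> 2" using y1 unfolding y_def by (simp add: divide_le_eq)
      finally show ?thesis unfolding ry y_def[symmetric] .
    qed
    have L1: "L \<ge> 1" using S1 SL by linarith
    have "6 * L \<le> 50 * lT * L"
    proof -
      have "6 * 1 \<le> 50 * lT" using lT1 by simp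
      then show ?thesis using L1 by (intro mult_right_mono) auto
    qed
    moreover have "50 * lT * L = 50 * (lT * L)" by simp
    ultimately show ?thesis using c1 rB small L1 by linarith
  qed
  have "expDR T (T + 1) ((real T + 1) ^ 3) v m \<le> min (50 * lT * Q) (50 * lT * L)" using A B by simp
  also have "\<dots> = 50 * lT * min Q L" using lT1 by (simp add: min_mult_distrib_left)
  finally show ?thesis unfolding Q_def S_def L_def lT_def by simp
qed

theorem theorem3:
  shows "\<exists>NB :: nat \<Rightarrow> nat. \<exists>etaB :: nat \<Rightarrow> real.
     (\<forall>T. NB T \<ge> 1 \<and> etaB T > 0) \<and>
     (\<forall>c>0. \<exists>(C::real) (k::nat) (T0::nat). \<forall>T\<ge>T0. \<forall>v m.
        (\<forall>t\<in>{1..T}. v t \<in> {0..1} \<and> m t \<in> {0..1}) \<and> VT m T \<ge> c * ln (real T) \<longrightarrow>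
        expDR T (NB T) (etaB T) v m
          \<le> C * (ln (real T)) ^ k * min (sqrt (real T * VT m T)) (LT m T))"
proof -
  have main: "\<forall>c>0. \<exists>(C::real) (k::nat) (T0::nat). \<forall>T\<ge>T0. \<forall>v m.
        (\<forall>t\<in>{1..T}. v t \<in> {0..1} \<and> m t \<in> {0..1}) \<and> VT m T \<ge> c * ln (real T) \<longrightarrow>
        expDR T (T + 1) ((real T + 1) ^ 3) v m
          \<le> C * (ln (real T)) ^ k * min (sqrt (real T * VT m T)) (LT m T)"
  proof (intro allI impI)
    fix c :: real assume c: "c > 0"
    define T0 where "T0 = max 4 (nat \<lceil>exp (1 / c)\<rceil>)"
    show "\<exists>(C::real) (k::nat) (T0::nat). \<forall>T\<ge>T0. \<forall>v m.
        (\<forall>t\<in>{1..T}. v t \<in> {0..1} \<and> m t \<in> {0..1}) \<and> VT m T \<ge> c * ln (real T) \<longrightarrow>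
        expDR T (T + 1) ((real T + 1) ^ 3) v m
          \<le> C * (ln (real T)) ^ k * min (sqrt (real T * VT m T)) (LT m T)"
    proof (rule exI[where x="50::real"], rule exI[where x="1::nat"], rule exI[where x=T0], intro allI impI)
      fix T :: nat and v m :: "nat \<Rightarrow> real"
      assume T: "T0 \<le> T"
        and h: "(\<forall>t\<in>{1..T}. v t \<in> {0..1} \<and> m t \<in> {0..1}) \<and> c * ln (real T) \<le> VT m T"
      have T4: "T \<ge> 4" using T unfolding T0_def by simp
      have Tp: "real T > 0" using T4 by simp
      have "exp (1 / c) \<le> real (nat \<lceil>exp (1 / c)\<rceil>)" by linarith
      also have "\<dots> \<le> real T"
      proof -
        have n: "nat \<lceil>exp (1 / c)\<rceil> \<le> T" using T unfolding T0_def by simp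
        then show ?thesis by (rule of_nat_mono)
      qed
      finally have "1 / c \<le> ln (real T)" using Tp by (subst ln_ge_iff) auto
      then have cl: "c * ln (real T) \<ge> 1" using c by (simp add: divide_le_eq mult.commute)
      show "expDR T (T + 1) ((real T + 1) ^ 3) v m
          \<le> 50 * (ln (real T)) ^ 1 * min (sqrt (real T * VT m T)) (LT m T)"
        using main_bound[OF T4 cl] h by blast
    qed
  qed
  show ?thesis
    by (rule exI[of _ "\<lambda>T. T + 1"], rule exI[of _ "\<lambda>T. (real T + 1) ^ 3"]) (use main in auto)
qed

end
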